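(* Let $\mathcal{H}_\mathrm{V}$ and $\mathcal{H}_\mathrm{L}$ be finite-dimensional Hilbert spaces, let $\eta_\mathrm{V}\in\mathcal{P}(\mathcal{H}_\mathrm{V})$ be a target density operator, and let $\{\rho(\theta)\}_\theta\subset\mathcal{P}(\mathcal{H}_\mathrm{V}\otimes\mathcal{H}_\mathrm{L})$ be a density operator latent variable model with $\rho(\theta)$ positive definite for every $\theta$, and $\rho_\mathrm{V}(\theta)=\mathrm{Tr}_\mathrm{L}\rho(\theta)$. Let $\mathcal{J}(\eta_\mathrm{V})=\{\eta\in\mathcal{P}(\mathcal{H}_\mathrm{V}\otimes\mathcal{H}_\mathrm{L}) : \mathrm{Tr}_\mathrm{L}\eta=\eta_\mathrm{V}\}$. Then for every $\theta$ and every $\eta\in\mathcal{J}(\eta_\mathrm{V})$, $$\mathcal{L}(\theta)=\mathrm{Tr}(\eta_\mathrm{V}\log\rho_\mathrm{V}(\theta))\;\geq\; \mathrm{QELBO}(\eta,\theta):=\mathrm{Tr}(\eta\log\rho(\theta))+S(\eta)-S(\eta_\mathrm{V}).$$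
   Context: $\mathcal{P}(\mathcal{H})$ denotes the set of density operators on $\mathcal{H}$ (Hermitian, positive semidefinite, unit trace). $\mathrm{Tr}_\mathrm{L}$ is the partial trace over $\mathcal{H}_\mathrm{L}$. $S(\eta)=-\mathrm{Tr}(\eta\log\eta)$ is the von Neumann entropy (with $0\log 0=0$). $\mathcal{L}(\theta)$ is called the log-likelihood of the model for the target $\eta_\mathrm{V}$. *)

theory Defs
  imports Complex_Main "Jordan_Normal_Form.Matrix" "Jordan_Normal_Form.Schur_Decomposition"
begin

text \<open>Finite-dimensional Hilbert spaces are modelled as complex coordinate spaces;
operators are complex square matrices (JNF type complex mat, square).\<close>

definition hermitian_mat :: "nat \<Rightarrow> complex mat \<Rightarrow> bool" where
  "hermitian_mat n A \<longleftrightarrow> A \<in> carrier_mat n n \<and> mat_adjoint A = A"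

definition psd_mat :: "nat \<Rightarrow> complex mat \<Rightarrow> bool" where
  "psd_mat n A \<longleftrightarrow> hermitian_mat n A \<and>
     (\<forall>v \<in> carrier_vec n. 0 \<le> Re (conjugate v \<bullet> (A *\<^sub>v v)))"

definition pd_mat :: "nat \<Rightarrow> complex mat \<Rightarrow> bool" where
  "pd_mat n A \<longleftrightarrow> hermitian_mat n A \<and>
     (\<forall>v \<in> carrier_vec n. v \<noteq> 0\<^sub>v n \<longrightarrow> 0 < Re (conjugate v \<bullet> (A *\<^sub>v v)))"

definition mat_trace :: "complex mat \<Rightarrow> complex" where
  "mat_trace A = (\<Sum>i<dim_row A. A $$ (i, i))"

definition density_mat :: "nat \<Rightarrow> complex mat \<Rightarrow> bool" where
  "density_mat n A \<longleftrightarrow> psd_mat n A \<and> mat_trace A = 1"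

definition unitary_mat :: "nat \<Rightarrow> complex mat \<Rightarrow> bool" where
  "unitary_mat n U \<longleftrightarrow> U \<in> carrier_mat n n \<and> U * mat_adjoint U = 1\<^sub>m n"

definition real_diag_mat :: "nat \<Rightarrow> (nat \<Rightarrow> real) \<Rightarrow> complex mat" where
  "real_diag_mat n d = mat n n (\<lambda>(i,j). if i = j then complex_of_real (d i) else 0)"

definition mat_fun :: "(real \<Rightarrow> real) \<Rightarrow> complex mat \<Rightarrow> complex mat" where
  "mat_fun f A = (SOME B. \<exists>U d. unitary_mat (dim_row A) U \<and>
        A = U * real_diag_mat (dim_row A) d * mat_adjoint U \<and>
        B = U * real_diag_mat (dim_row A) (f \<circ> d) * mat_adjoint U)"

definition mat_log :: "complex mat \<Rightarrow> complex mat" where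
  "mat_log A = mat_fun ln A"

text \<open>Von Neumann entropy S(eta) = - Tr(eta log eta). On the kernel of eta the
  factor eta annihilates log eta, so the convention 0 log 0 = 0 is automatic.\<close>
definition vn_entropy :: "complex mat \<Rightarrow> real" where
  "vn_entropy A = - Re (mat_trace (A * mat_log A))"

text \<open>Partial trace over H_L for H_V (dim dV) tensor H_L (dim dL); basis index
  (i,j) of the product corresponds to i * dL + j.\<close>
definition ptrace_L :: "nat \<Rightarrow> nat \<Rightarrow> complex mat \<Rightarrow> complex mat" where
  "ptrace_L dV dL A = mat dV dV (\<lambda>(i,i'). \<Sum>j<dL. A $$ (i * dL + j, i' * dL + j))"

definition joint_set :: "nat \<Rightarrow> nat \<Rightarrow> complex mat \<Rightarrow> complex mat set" where
  "joint_set dV dL etaV = {eta. density_mat (dV * dL) eta \<and> ptrace_L dV dL eta = etaV}"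

definition log_likelihood :: "nat \<Rightarrow> nat \<Rightarrow> complex mat \<Rightarrow> complex mat \<Rightarrow> real" where
  "log_likelihood dV dL etaV rho = Re (mat_trace (etaV * mat_log (ptrace_L dV dL rho)))"

definition QELBO :: "complex mat \<Rightarrow> complex mat \<Rightarrow> complex mat \<Rightarrow> real" where
  "QELBO etaV eta rho =
     Re (mat_trace (eta * mat_log rho)) + vn_entropy eta - vn_entropy etaV"

end

theory Submission
  imports Defs "HOL-Computational_Algebra.Fundamental_Theorem_Algebra"
begin

lemma adj_carrier[simp]: "A \<in> carrier_mat n m \<Longrightarrow> mat_adjoint A \<in> carrier_mat m n"
  unfolding mat_adjoint_def by (auto simp: mat_of_rows_def)

lemma adj_dims[simp]: "dim_row (mat_adjoint A) = dim_col A" "dim_col (mat_adjoint A) = dim_row A"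
  unfolding mat_adjoint_def by (auto simp: mat_of_rows_def)

lemma adj_index[simp]: "i < dim_col A \<Longrightarrow> j < dim_row A \<Longrightarrow> mat_adjoint A $$ (i,j) = cnj (A $$ (j,i))"
  unfolding mat_adjoint_def by (auto simp: mat_of_rows_def)

lemma mat_trace_def': "mat_trace A = (\<Sum>i<dim_row A. A $$ (i, i))" by (simp add: mat_trace_def)

lemma sq_mult_carrier[simp]: "A \<in> carrier_mat n n \<Longrightarrow> B \<in> carrier_mat n n \<Longrightarrow> A * B \<in> carrier_mat n n"
  by (rule mult_carrier_mat)

lemma trace_cyc:
  assumes "A \<in> carrier_mat n m" "B \<in> carrier_mat m n"
  shows "mat_trace (A * B) = mat_trace (B * A)"
proof -
  have "mat_trace (A * B) = (\<Sum>i<n. \<Sum>k<m. A $$ (i,k) * B $$ (k,i))"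
    using assms by (auto simp: mat_trace_def scalar_prod_def atLeast0LessThan intro!: sum.cong)
  also have "\<dots> = (\<Sum>k<m. \<Sum>i<n. B $$ (k,i) * A $$ (i,k))"
    by (subst sum.swap) (simp add: mult.commute)
  also have "\<dots> = mat_trace (B * A)"
    using assms by (auto simp: mat_trace_def scalar_prod_def atLeast0LessThan intro!: sum.cong)
  finally show ?thesis .
qed

lemma adj_mult:
  assumes "(A::complex mat) \<in> carrier_mat n m" "B \<in> carrier_mat m k"
  shows "mat_adjoint (A * B) = mat_adjoint B * mat_adjoint A"
  using assms by (intro eq_matI) (auto simp: scalar_prod_def mult.commute)

lemma adj_adj[simp]: "mat_adjoint (mat_adjoint (A::complex mat)) = A"
  by (intro eq_matI) auto

lemma adj_one[simp]: "mat_adjoint (1\<^sub>m n) = (1\<^sub>m n :: complex mat)"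
  by (intro eq_matI) auto

lemma unitary_carrier: "unitary_mat n U \<Longrightarrow> U \<in> carrier_mat n n"
  by (simp add: unitary_mat_def)

lemma unitary_right: "unitary_mat n U \<Longrightarrow> U * mat_adjoint U = 1\<^sub>m n"
  by (simp add: unitary_mat_def)

lemma unitary_left: "unitary_mat n U \<Longrightarrow> mat_adjoint U * U = 1\<^sub>m n"
  unfolding unitary_mat_def
  by (rule mat_mult_left_right_inverse[of U n]) auto

lemma rdiag_carrier[simp]: "real_diag_mat n d \<in> carrier_mat n n"
  by (simp add: real_diag_mat_def)

lemma rdiag_index[simp]: "i < n \<Longrightarrow> j < n \<Longrightarrow> real_diag_mat n d $$ (i,j) = (if i = j then complex_of_real (d i) else 0)"
  by (simp add: real_diag_mat_def)

lemma rdiag_dims[simp]: "dim_row (real_diag_mat n d) = n" "dim_col (real_diag_mat n d) = n"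
  by (auto simp add: real_diag_mat_def)

lemma adj_rdiag[simp]: "mat_adjoint (real_diag_mat n d) = real_diag_mat n d"
  by (intro eq_matI) auto

lemma mult_adj_index:
  assumes "(M::complex mat) \<in> carrier_mat n k" "M' \<in> carrier_mat m k" "i < n" "j < m"
  shows "(M * mat_adjoint M') $$ (i,j) = (\<Sum>l<k. M $$ (i,l) * cnj (M' $$ (j,l)))"
  using assms by (auto simp: scalar_prod_def atLeast0LessThan intro!: sum.cong)

lemma mult_rdiag_adj_index:
  assumes "(M::complex mat) \<in> carrier_mat n k" "M' \<in> carrier_mat m k" "i < n" "j < m"
  shows "(M * real_diag_mat k d * mat_adjoint M') $$ (i,j) = (\<Sum>l<k. M $$ (i,l) * d l * cnj (M' $$ (j,l)))"
proof -
  have e: "M * real_diag_mat k d = mat n k (\<lambda>(i,l). M $$ (i,l) * d l)"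
  proof (rule eq_matI)
    fix i l assume il: "i < dim_row (mat n k (\<lambda>(i,l). M $$ (i,l) * d l))" "l < dim_col (mat n k (\<lambda>(i,l). M $$ (i,l) * d l))"
    then have il: "i < n" "l < k" by auto
    have "(M * real_diag_mat k d) $$ (i,l) = (\<Sum>r\<in>{0..<k}. M $$ (i,r) * (if r = l then complex_of_real (d r) else 0))"
      using assms il by (auto simp: scalar_prod_def intro!: sum.cong)
    also have "\<dots> = M $$ (i,l) * d l" using il
      by (simp add: if_distrib cong: if_cong)
    finally show "(M * real_diag_mat k d) $$ (i,l) = mat n k (\<lambda>(i,l). M $$ (i,l) * d l) $$ (i,l)"
      using il by simp
  qed (use assms in auto)
  show ?thesis unfolding e
    by (subst mult_adj_index[of _ n k _ m]) (use assms in auto)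
qed

lemma mult_index:
  assumes "(X::'a::comm_semiring_0 mat) \<in> carrier_mat a b" "Y \<in> carrier_mat b c" "i < a" "j < c"
  shows "(X * Y) $$ (i,j) = (\<Sum>k<b. X $$ (i,k) * Y $$ (k,j))"
  using assms by (auto simp: scalar_prod_def atLeast0LessThan intro!: sum.cong)

lemma cs_expand: "(x::complex vec) \<in> carrier_vec n \<Longrightarrow> y \<in> carrier_vec n \<Longrightarrow> x \<bullet>c y = (\<Sum>i<n. x$i * cnj (y$i))"
  by (auto simp: scalar_prod_def atLeast0LessThan intro!: sum.cong)

lemma cs_smult: "(x::complex vec) \<in> carrier_vec n \<Longrightarrow> y \<in> carrier_vec n \<Longrightarrow> (a \<cdot>\<^sub>v x) \<bullet>c (b \<cdot>\<^sub>v y) = a * cnj b * (x \<bullet>c y)"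
  by (simp add: cs_expand sum_distrib_left mult_ac)

lemma mult_cnj_sq: "z * cnj z = (complex_of_real (cmod z))^2"
  by (metis complex_norm_square of_real_power)

lemma cs_self_real: "(x::complex vec) \<in> carrier_vec n \<Longrightarrow> x \<bullet>c x = complex_of_real (\<Sum>i<n. (cmod (x$i))^2)"
  by (simp add: cs_expand mult_cnj_sq)

lemma cs_self_pos: "(x::complex vec) \<in> carrier_vec n \<Longrightarrow> x \<noteq> 0\<^sub>v n \<Longrightarrow> 0 < (\<Sum>i<n. (cmod (x$i))^2)"
proof -
  assume x: "x \<in> carrier_vec n" "x \<noteq> 0\<^sub>v n"
  then obtain i where i: "i < n" "x $ i \<noteq> 0" by (metis eq_vecI carrier_vecD index_zero_vec(1,2))
  have "0 < (cmod (x$i))^2" using i by simp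
  also have "\<dots> \<le> (\<Sum>i<n. (cmod (x$i))^2)"
    by (rule member_le_sum) (use i in auto)
  finally show ?thesis .
qed

definition nrmz :: "complex vec \<Rightarrow> complex vec" where
  "nrmz w = (1 / complex_of_real (sqrt (Re (w \<bullet>c w)))) \<cdot>\<^sub>v w"

lemma nrmz_carrier[simp]: "w \<in> carrier_vec n \<Longrightarrow> nrmz w \<in> carrier_vec n"
  by (simp add: nrmz_def)

lemma nrmz_unit: assumes "w \<in> carrier_vec n" "w \<noteq> 0\<^sub>v n" shows "nrmz w \<bullet>c nrmz w = 1"
proof -
  define S where "S = (\<Sum>i<n. (cmod (w$i))^2)"
  have S: "0 < S" "w \<bullet>c w = complex_of_real S" using cs_self_pos[OF assms] cs_self_real[OF assms(1)] by (auto simp: S_def)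
  have "nrmz w \<bullet>c nrmz w = (1 / complex_of_real (sqrt S)) * cnj (1 / complex_of_real (sqrt S)) * complex_of_real S"
    unfolding nrmz_def by (subst cs_smult[of _ n]) (use assms S in auto)
  also have "\<dots> = complex_of_real S / (complex_of_real (sqrt S) * complex_of_real (sqrt S))" by simp
  also have "complex_of_real (sqrt S) * complex_of_real (sqrt S) = complex_of_real S"
    using S(1) by (metis abs_of_pos of_real_mult real_sqrt_mult_self)
  also have "complex_of_real S / complex_of_real S = 1" using S(1) by simp
  finally show ?thesis .
qed

lemma nrmz_id: assumes "w \<bullet>c w = 1" shows "nrmz w = w"
  using assms by (simp add: nrmz_def)

lemma nrmz_orth: assumes "v \<in> carrier_vec n" "w \<in> carrier_vec n" "v \<bullet>c w = 0" shows "nrmz v \<bullet>c nrmz w = 0"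
  unfolding nrmz_def by (subst cs_smult[of _ n]) (use assms in auto)

lemma hermitian_spectral:
  fixes A :: "complex mat"
  assumes "hermitian_mat n A"
  shows "\<exists>U d. unitary_mat n U \<and> A = U * real_diag_mat n d * mat_adjoint U"
  using assms
proof (induction n arbitrary: A)
  case 0
  then have A: "A \<in> carrier_mat 0 0" by (simp add: hermitian_mat_def)
  show ?case
    by (rule exI[of _ "1\<^sub>m 0"], rule exI[of _ "\<lambda>_. 0"])
       (use A in \<open>auto simp: unitary_mat_def intro!: eq_matI\<close>)
next
  case (Suc m)
  define n where "n = Suc m"
  have A: "A \<in> carrier_mat n n" and Aadj: "mat_adjoint A = A"
    using Suc.prems by (auto simp: hermitian_mat_def n_def)
  have "degree (char_poly A) = n" using degree_monic_char_poly[OF A] by simp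
  then have "\<not> constant (poly (char_poly A))" by (simp add: constant_degree n_def)
  then obtain e where "poly (char_poly A) e = 0" using fundamental_theorem_of_algebra by blast
  then have "eigenvalue A e" using eigenvalue_root_char_poly[OF A] by simp
  then obtain v where v: "v \<in> carrier_vec n" "v \<noteq> 0\<^sub>v n" "A *\<^sub>v v = e \<cdot>\<^sub>v v"
    unfolding eigenvalue_def eigenvector_def using A by auto
  define v1 where "v1 = nrmz v"
  have v1: "v1 \<in> carrier_vec n" "v1 \<bullet>c v1 = 1" using v nrmz_unit by (auto simp: v1_def)
  have v10: "v1 \<noteq> 0\<^sub>v n" using v1 by (auto simp: cs_expand)
  have Av1: "A *\<^sub>v v1 = e \<cdot>\<^sub>v v1"
    unfolding v1_def nrmz_def using v A by (intro eq_vecI) (auto simp: mult_mat_vec)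
  interpret cof_vec_space n "TYPE(complex)" .
  define b where "b = basis_completion v1"
  define ws where "ws = gram_schmidt n b"
  from basis_completion[OF v1(1) v10, folded b_def]
  have dist_b: "distinct b" and indep: "\<not> lin_dep (set b)" and bc: "set b \<subseteq> carrier_vec n"
    and hdb: "hd b = v1" and len_b: "length b = n" by auto
  from hdb len_b obtain vs where bv: "b = v1 # vs" by (cases b) (auto simp: n_def)
  from gram_schmidt_result[OF bc dist_b indep refl, folded ws_def]
  have ws: "set ws \<subseteq> carrier_vec n" "corthogonal ws" "length ws = n"
    by (auto simp: len_b)
  have hdws: "hd ws = v1" unfolding ws_def bv using v1 by simp
  define us where "us = map nrmz ws"
  have lus: "length us = n" using ws by (simp add: us_def)
  have usc: "\<And>i. i < n \<Longrightarrow> us ! i \<in> carrier_vec n"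
  proof -
    fix i assume i: "i < n"
    then have "ws ! i \<in> carrier_vec n" using ws by auto
    then show "us ! i \<in> carrier_vec n" using i ws by (simp add: us_def)
  qed
  have usorth: "\<And>i j. i < n \<Longrightarrow> j < n \<Longrightarrow> us ! i \<bullet>c us ! j = (if i = j then 1 else 0)"
  proof -
    fix i j assume ij: "i < n" "j < n"
    have wi: "ws ! i \<in> carrier_vec n" "ws ! j \<in> carrier_vec n" using ws ij by auto
    show "us ! i \<bullet>c us ! j = (if i = j then 1 else 0)"
    proof (cases "i = j")
      case True
      have "ws ! i \<noteq> 0\<^sub>v n"
      proof
        assume "ws ! i = 0\<^sub>v n"
        then have "ws ! i \<bullet>c ws ! i = 0" by (simp add: cs_expand)
        then show False using corthogonalD[OF ws(2), of i i] ws ij by auto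
      qed
      then show ?thesis using True nrmz_unit[OF wi(1)] ij ws by (simp add: us_def)
    next
      case False
      then have "ws ! i \<bullet>c ws ! j = 0" using corthogonalD[OF ws(2), of i j] ws ij by auto
      then show ?thesis using False nrmz_orth[OF wi] ij ws by (simp add: us_def)
    qed
  qed
  have "ws \<noteq> []" using ws by (auto simp: n_def)
  then have "ws ! 0 = v1" using hdws hd_conv_nth by metis
  then have us0: "us ! 0 = v1"
    using ws v1 by (simp add: us_def nrmz_id n_def)
  define W where "W = mat_of_cols n us"
  have W: "W \<in> carrier_mat n n" using lus mat_of_cols_carrier(1)[of n us] by (simp add: W_def)
  have Wi: "\<And>k i. k < n \<Longrightarrow> i < n \<Longrightarrow> W $$ (k,i) = us ! i $ k"
    using lus by (simp add: W_def mat_of_cols_index)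
  have WhW: "mat_adjoint W * W = 1\<^sub>m n"
  proof (rule eq_matI)
    fix i j assume ij: "i < dim_row (1\<^sub>m n :: complex mat)" "j < dim_col (1\<^sub>m n :: complex mat)"
    then have ij: "i < n" "j < n" by auto
    have "(mat_adjoint W * W) $$ (i,j) = (\<Sum>k<n. cnj (W $$ (k,i)) * W $$ (k,j))"
      by (subst mult_index[of _ n n _ n]) (use W ij in auto)
    also have "\<dots> = us ! j \<bullet>c us ! i"
      using ij usc by (subst cs_expand[of _ n]) (auto simp: Wi mult.commute)
    also have "\<dots> = 1\<^sub>m n $$ (i,j)" using usorth ij by auto
    finally show "(mat_adjoint W * W) $$ (i,j) = 1\<^sub>m n $$ (i,j)" .
  qed (use W in auto)
  have WWh: "W * mat_adjoint W = 1\<^sub>m n"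
    by (rule mat_mult_left_right_inverse[OF _ W WhW]) (use W in simp)
  define A' where "A' = mat_adjoint W * A * W"
  have A': "A' \<in> carrier_mat n n" unfolding A'_def using A W by simp
  have A'adj: "mat_adjoint A' = A'"
  proof -
    have "mat_adjoint A' = mat_adjoint W * mat_adjoint (mat_adjoint W * A)"
      unfolding A'_def by (rule adj_mult[of _ n n _ n]) (use A W in auto)
    also have "mat_adjoint (mat_adjoint W * A) = mat_adjoint A * W"
      by (subst adj_mult[of _ n n _ n]) (use A W in auto)
    also have "mat_adjoint W * (mat_adjoint A * W) = A'"
      unfolding A'_def Aadj by (rule assoc_mult_mat[symmetric, of _ n n _ n _ n]) (use A W in auto)
    finally show ?thesis .
  qed
  have AW0: "\<And>k. k < n \<Longrightarrow> (A * W) $$ (k,0) = e * W $$ (k,0)"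
  proof -
    fix k assume k: "k < n"
    have "(A * W) $$ (k,0) = row A k \<bullet> col W 0" using A W k by (simp add: n_def)
    also have "col W 0 = v1" using col_mat_of_cols[of 0 us n] us0 usc[of 0] lus by (simp add: W_def n_def)
    also have "row A k \<bullet> v1 = (A *\<^sub>v v1) $ k" using A k by simp
    also have "\<dots> = e * v1 $ k" using Av1 v1 k by simp
    also have "v1 $ k = W $$ (k,0)" using Wi[of k 0] k us0 by (simp add: n_def)
    finally show "(A * W) $$ (k,0) = e * W $$ (k,0)" .
  qed
  have A'0: "\<And>i. i < n \<Longrightarrow> A' $$ (i,0) = (if i = 0 then e else 0)"
  proof -
    fix i assume i: "i < n"
    have "A' $$ (i,0) = (mat_adjoint W * (A * W)) $$ (i,0)" unfolding A'_def
      by (subst assoc_mult_mat[of _ n n _ n _ n]) (use A W in auto)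
    also have "\<dots> = (\<Sum>k<n. mat_adjoint W $$ (i,k) * (A * W) $$ (k,0))"
      by (rule mult_index[of _ n n _ n]) (use A W i in \<open>auto simp: n_def\<close>)
    also have "\<dots> = e * (\<Sum>k<n. mat_adjoint W $$ (i,k) * W $$ (k,0))"
      by (simp add: AW0 sum_distrib_left mult_ac)
    also have "(\<Sum>k<n. mat_adjoint W $$ (i,k) * W $$ (k,0)) = (mat_adjoint W * W) $$ (i,0)"
      by (rule mult_index[symmetric, of _ n n _ n]) (use A W i in \<open>auto simp: n_def\<close>)
    also have "\<dots> = (if i = 0 then 1 else 0)" using WhW i by (simp add: n_def)
    finally show "A' $$ (i,0) = (if i = 0 then e else 0)" by simp
  qed
  have A'sym: "\<And>i j. i < n \<Longrightarrow> j < n \<Longrightarrow> A' $$ (i,j) = cnj (A' $$ (j,i))"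
    using A'adj A' by (metis adj_index carrier_matD(1,2))
  have ereal: "e = complex_of_real (Re e)"
    using A'sym[of 0 0] A'0[of 0] by (auto simp: n_def complex_eq_iff)
  have A'0r: "\<And>j. j < n \<Longrightarrow> A' $$ (0,j) = (if j = 0 then e else 0)"
    using A'sym A'0 ereal by (metis complex_cnj_complex_of_real complex_cnj_zero n_def zero_less_Suc)
  define A3 where "A3 = mat m m (\<lambda>(i,j). A' $$ (Suc i, Suc j))"
  have "hermitian_mat m A3"
    unfolding hermitian_mat_def
    by (auto simp: A3_def intro!: eq_matI) (metis A'sym Suc_mono n_def)
  from Suc.IH[OF this] obtain U3 d3 where U3: "unitary_mat m U3" and A3d: "A3 = U3 * real_diag_mat m d3 * mat_adjoint U3"
    by blast
  have U3c: "U3 \<in> carrier_mat m m" using U3 by (simp add: unitary_mat_def)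
  define E where "E = mat n n (\<lambda>(i,j). if i = 0 then (if j = 0 then 1 else 0) else if j = 0 then 0 else U3 $$ (i-1,j-1))"
  define d where "d = (\<lambda>i. if i = 0 then Re e else d3 (i-1))"
  have E: "E \<in> carrier_mat n n" by (simp add: E_def)
  have EDE: "E * real_diag_mat n d * mat_adjoint E = A'"
  proof (rule eq_matI)
    fix i j assume "i < dim_row A'" "j < dim_col A'"
    then have ij: "i < n" "j < n" using A' by auto
    have "(E * real_diag_mat n d * mat_adjoint E) $$ (i,j) = (\<Sum>l<n. E $$ (i,l) * d l * cnj (E $$ (j,l)))"
      by (rule mult_rdiag_adj_index[OF E E ij])
    also have "\<dots> = E $$ (i,0) * d 0 * cnj (E $$ (j,0)) + (\<Sum>l<m. E $$ (i,Suc l) * d (Suc l) * cnj (E $$ (j,Suc l)))"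
      unfolding n_def by (rule sum.lessThan_Suc_shift)
    also have "\<dots> = A' $$ (i,j)"
    proof (cases i)
      case 0
      then show ?thesis using ij A'0r[of j] ereal by (auto simp: E_def d_def n_def)
    next
      case (Suc i')
      note i' = Suc
      show ?thesis
      proof (cases j)
        case 0
        then show ?thesis using ij A'0[of i] i' by (auto simp: E_def d_def n_def)
      next
        case (Suc j')
        have "(\<Sum>l<m. E $$ (i,Suc l) * d (Suc l) * cnj (E $$ (j,Suc l))) = (\<Sum>l<m. U3 $$ (i',l) * d3 l * cnj (U3 $$ (j',l)))"
          using ij i' Suc by (auto simp: E_def d_def n_def intro!: sum.cong)
        also have "\<dots> = A3 $$ (i',j')"
          unfolding A3d by (rule mult_rdiag_adj_index[symmetric, OF U3c U3c]) (use ij i' Suc in \<open>auto simp: n_def\<close>)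
        also have "\<dots> = A' $$ (i,j)" using ij i' Suc by (simp add: A3_def n_def)
        finally show ?thesis using i' Suc ij by (simp add: E_def n_def)
      qed
    qed
    finally show "(E * real_diag_mat n d * mat_adjoint E) $$ (i,j) = A' $$ (i,j)" .
  qed (use A' E in auto)
  have EE: "E * mat_adjoint E = 1\<^sub>m n"
  proof (rule eq_matI)
    fix i j assume "i < dim_row (1\<^sub>m n :: complex mat)" "j < dim_col (1\<^sub>m n :: complex mat)"
    then have ij: "i < n" "j < n" by auto
    have "(E * mat_adjoint E) $$ (i,j) = (\<Sum>l<n. E $$ (i,l) * cnj (E $$ (j,l)))"
      by (rule mult_adj_index[OF E E ij])
    also have "\<dots> = E $$ (i,0) * cnj (E $$ (j,0)) + (\<Sum>l<m. E $$ (i,Suc l) * cnj (E $$ (j,Suc l)))"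
      unfolding n_def by (rule sum.lessThan_Suc_shift)
    also have "\<dots> = 1\<^sub>m n $$ (i,j)"
    proof (cases i)
      case 0
      then show ?thesis using ij by (auto simp: E_def n_def)
    next
      case (Suc i')
      note i' = Suc
      show ?thesis
      proof (cases j)
        case 0
        then show ?thesis using ij i' by (auto simp: E_def n_def)
      next
        case (Suc j')
        have "(\<Sum>l<m. E $$ (i,Suc l) * cnj (E $$ (j,Suc l))) = (\<Sum>l<m. U3 $$ (i',l) * cnj (U3 $$ (j',l)))"
          using ij i' Suc by (auto simp: E_def n_def intro!: sum.cong)
        also have "\<dots> = (U3 * mat_adjoint U3) $$ (i',j')"
          by (rule mult_adj_index[symmetric, OF U3c U3c]) (use ij i' Suc in \<open>auto simp: n_def\<close>)
        also have "\<dots> = 1\<^sub>m m $$ (i',j')" using U3 by (simp add: unitary_mat_def)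
        finally show ?thesis using i' Suc ij by (simp add: E_def n_def)
      qed
    qed
    finally show "(E * mat_adjoint E) $$ (i,j) = 1\<^sub>m n $$ (i,j)" .
  qed (use E in auto)
  define U where "U = W * E"
  have Uc: "U \<in> carrier_mat n n" using W E by (simp add: U_def)
  have Uadj: "mat_adjoint U = mat_adjoint E * mat_adjoint W"
    unfolding U_def by (rule adj_mult[of _ n n _ n]) (use W E in auto)
  have "U * mat_adjoint U = W * ((E * mat_adjoint E) * mat_adjoint W)"
    unfolding Uadj unfolding U_def using W E by (simp only: assoc_mult_mat[of _ n n _ n _ n] adj_carrier sq_mult_carrier)
  also have "\<dots> = 1\<^sub>m n" using WWh W by (simp only: EE left_mult_one_mat[of _ n n] adj_carrier)
  finally have Uu: "unitary_mat n U" using Uc by (simp add: unitary_mat_def)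
  have "U * real_diag_mat n d * mat_adjoint U = W * (E * real_diag_mat n d * mat_adjoint E) * mat_adjoint W"
    unfolding Uadj unfolding U_def using W E by (simp only: assoc_mult_mat[of _ n n _ n _ n] adj_carrier sq_mult_carrier rdiag_carrier)
  also have "\<dots> = W * A' * mat_adjoint W" by (simp only: EDE)
  also have "\<dots> = (W * mat_adjoint W) * A * (W * mat_adjoint W)"
    unfolding A'_def using W A by (simp only: assoc_mult_mat[of _ n n _ n _ n] adj_carrier sq_mult_carrier)
  also have "\<dots> = A" using WWh A by simp
  finally show ?case using Uu unfolding n_def by metis
qed

lemma mat_fun_spec:
  assumes "hermitian_mat n A"
  shows "\<exists>U d. unitary_mat n U \<and> A = U * real_diag_mat n d * mat_adjoint U \<and>
           mat_fun f A = U * real_diag_mat n (f \<circ> d) * mat_adjoint U"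
proof -
  have dr: "dim_row A = n" using assms unfolding hermitian_mat_def carrier_mat_def by simp
  obtain U d where "unitary_mat n U" "A = U * real_diag_mat n d * mat_adjoint U"
    using hermitian_spectral[OF assms] by blast
  then have ex: "\<exists>B U d. unitary_mat n U \<and> A = U * real_diag_mat n d * mat_adjoint U \<and>
        B = U * real_diag_mat n (f \<circ> d) * mat_adjoint U" by blast
  show ?thesis unfolding mat_fun_def dr using someI_ex[OF ex] by blast
qed

lemma unitary_cancel_left:
  assumes "unitary_mat n U" "(X::complex mat) \<in> carrier_mat n k"
  shows "mat_adjoint U * (U * X) = X"
proof -
  have U: "U \<in> carrier_mat n n" using assms by (simp add: unitary_mat_def)
  have "mat_adjoint U * (U * X) = (mat_adjoint U * U) * X"
    using U assms by (simp add: assoc_mult_mat[of _ n n _ n _ k])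
  then show ?thesis using unitary_left[OF assms(1)] assms by simp
qed

lemma unitary_cancel_left':
  assumes "unitary_mat n U" "(X::complex mat) \<in> carrier_mat n k"
  shows "U * (mat_adjoint U * X) = X"
proof -
  have U: "U \<in> carrier_mat n n" using assms by (simp add: unitary_mat_def)
  have "U * (mat_adjoint U * X) = (U * mat_adjoint U) * X"
    using U assms by (simp add: assoc_mult_mat[of _ n n _ n _ k])
  then show ?thesis using unitary_right[OF assms(1)] assms by simp
qed

lemma diag_of_conj:
  assumes U: "unitary_mat n U" and A: "A = U * real_diag_mat n d * mat_adjoint U"
  shows "mat_adjoint U * A * U = real_diag_mat n d"
proof -
  have Uc: "U \<in> carrier_mat n n" using U by (simp add: unitary_mat_def)
  have "mat_adjoint U * A * U = (mat_adjoint U * U) * real_diag_mat n d * (mat_adjoint U * U)"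
    unfolding A using Uc by (simp add: assoc_mult_mat[of _ n n _ n _ n])
  also have "\<dots> = real_diag_mat n d"
    unfolding unitary_left[OF U] by simp
  finally show ?thesis .
qed

lemma quad_form_col:
  assumes "(A::complex mat) \<in> carrier_mat n n" "U \<in> carrier_mat n n" "i < n"
  shows "conjugate (col U i) \<bullet> (A *\<^sub>v col U i) = (mat_adjoint U * A * U) $$ (i,i)"
proof -
  have "(mat_adjoint U * A * U) $$ (i,i) = (mat_adjoint U * (A * U)) $$ (i,i)"
    using assms by (simp add: assoc_mult_mat[of _ n n _ n _ n])
  also have "\<dots> = (\<Sum>k<n. cnj (U $$ (k,i)) * (\<Sum>l<n. A $$ (k,l) * U $$ (l,i)))"
    using assms by (simp add: mult_index[of _ n n _ n] del: index_mult_mat(1))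
  finally show ?thesis using assms by (simp add: scalar_prod_def atLeast0LessThan)
qed

lemma unitary_col_nz:
  assumes U: "unitary_mat n U" "i < n"
  shows "col U i \<noteq> 0\<^sub>v n"
proof
  assume "col U i = 0\<^sub>v n"
  have Uc: "U \<in> carrier_mat n n" using U by (simp add: unitary_mat_def)
  have "(mat_adjoint U * U) $$ (i,i) = (\<Sum>k<n. cnj (U $$ (k,i)) * U $$ (k,i))"
    using U Uc by (simp add: mult_index[of _ n n _ n] del: index_mult_mat(1))
  also have "\<dots> = 0" using \<open>col U i = 0\<^sub>v n\<close> U Uc
    by (auto intro!: sum.neutral) (metis carrier_matD(1) col_def index_vec index_zero_vec(1))
  finally show False using unitary_left[OF U(1)] U by simp
qed

lemma psd_eig_nonneg:
  assumes "psd_mat n A" "unitary_mat n U" "A = U * real_diag_mat n d * mat_adjoint U" "i < n"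
  shows "0 \<le> d i"
proof -
  have A: "A \<in> carrier_mat n n" using assms by (simp add: psd_mat_def hermitian_mat_def)
  have Uc: "U \<in> carrier_mat n n" using assms by (simp add: unitary_mat_def)
  have "0 \<le> Re (conjugate (col U i) \<bullet> (A *\<^sub>v col U i))"
    using assms(1) Uc assms(4) by (simp add: psd_mat_def)
  also have "conjugate (col U i) \<bullet> (A *\<^sub>v col U i) = complex_of_real (d i)"
    using quad_form_col[OF A Uc assms(4)] diag_of_conj[OF assms(2,3)] assms(4) by simp
  finally show ?thesis by simp
qed

lemma pd_eig_pos:
  assumes "pd_mat n A" "unitary_mat n U" "A = U * real_diag_mat n d * mat_adjoint U" "i < n"
  shows "0 < d i"
proof -
  have A: "A \<in> carrier_mat n n" using assms by (simp add: pd_mat_def hermitian_mat_def)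
  have Uc: "U \<in> carrier_mat n n" using assms by (simp add: unitary_mat_def)
  have "0 < Re (conjugate (col U i) \<bullet> (A *\<^sub>v col U i))"
    using assms(1) Uc assms(4) unitary_col_nz[OF assms(2,4)] by (simp add: pd_mat_def)
  also have "conjugate (col U i) \<bullet> (A *\<^sub>v col U i) = complex_of_real (d i)"
    using quad_form_col[OF A Uc assms(4)] diag_of_conj[OF assms(2,3)] assms(4) by simp
  finally show ?thesis by simp
qed

definition ccf :: "complex mat \<Rightarrow> complex mat \<Rightarrow> nat \<Rightarrow> nat \<Rightarrow> real" where
  "ccf U W i j = (cmod ((mat_adjoint W * U) $$ (j,i)))^2"

lemma sum_delta_l: "i < (n::nat) \<Longrightarrow> (\<Sum>k<n. (if i = k then c else 0) * (f k::complex)) = c * f i"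
proof -
  assume i: "i < n"
  have "(\<Sum>k<n. (if i = k then c else 0) * f k) = (\<Sum>k<n. if k = i then c * f k else 0)"
    by (rule sum.cong) auto
  then show ?thesis using i sum.delta[of "{..<n}" i "\<lambda>k. c * f k"] by simp
qed

lemma sum_delta_r: "i < (n::nat) \<Longrightarrow> (\<Sum>k<n. (f k::complex) * (if k = i then c k else 0)) = f i * c i"
proof -
  assume i: "i < n"
  have "(\<Sum>k<n. f k * (if k = i then c k else 0)) = (\<Sum>k<n. if k = i then f k * c k else 0)"
    by (rule sum.cong) auto
  then show ?thesis using i sum.delta[of "{..<n}" i "\<lambda>k. f k * c k"] by simp
qed

lemma cnj_mult_sq: "cnj z * z = (complex_of_real (cmod z))^2"
  by (metis complex_norm_square of_real_power mult.commute)

lemma tr_diag_left: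
  assumes "(X::complex mat) \<in> carrier_mat n n"
  shows "mat_trace (real_diag_mat n x * X) = (\<Sum>i<n. complex_of_real (x i) * X $$ (i,i))"
proof -
  have "mat_trace (real_diag_mat n x * X) = (\<Sum>i<n. (real_diag_mat n x * X) $$ (i,i))"
    using assms by (simp add: mat_trace_def)
  also have "\<dots> = (\<Sum>i<n. \<Sum>k<n. real_diag_mat n x $$ (i,k) * X $$ (k,i))"
    using assms by (intro sum.cong refl, subst mult_index[of _ n n _ n]) auto
  also have "\<dots> = (\<Sum>i<n. complex_of_real (x i) * X $$ (i,i))"
    by (intro sum.cong refl) (simp add: sum_delta_l)
  finally show ?thesis .
qed

lemma tr_diag_right:
  assumes "(X::complex mat) \<in> carrier_mat n n"
  shows "mat_trace (X * real_diag_mat n x) = (\<Sum>i<n. X $$ (i,i) * complex_of_real (x i))"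
proof -
  have "mat_trace (X * real_diag_mat n x) = (\<Sum>i<n. (X * real_diag_mat n x) $$ (i,i))"
    using assms by (simp add: mat_trace_def)
  also have "\<dots> = (\<Sum>i<n. \<Sum>k<n. X $$ (i,k) * real_diag_mat n x $$ (k,i))"
    using assms by (intro sum.cong refl, subst mult_index[of _ n n _ n]) auto
  also have "\<dots> = (\<Sum>i<n. X $$ (i,i) * complex_of_real (x i))"
    by (intro sum.cong refl) (simp add: sum_delta_r)
  finally show ?thesis .
qed

lemma trace_conj:
  assumes W: "unitary_mat n W" and R: "(R::complex mat) \<in> carrier_mat n n"
  shows "mat_trace (W * (R * mat_adjoint W)) = mat_trace R"
proof -
  have Wc: "W \<in> carrier_mat n n" using W by (simp add: unitary_mat_def)
  have "mat_trace (W * (R * mat_adjoint W)) = mat_trace ((R * mat_adjoint W) * W)"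
    by (rule trace_cyc[of _ n n]) (use Wc R in auto)
  also have "(R * mat_adjoint W) * W = R * (mat_adjoint W * W)"
    using Wc R by (simp add: assoc_mult_mat[of _ n n _ n _ n])
  also have "\<dots> = R" using unitary_left[OF W] R by simp
  finally show ?thesis .
qed

lemma tr_UDU:
  assumes U: "unitary_mat n U"
  shows "mat_trace (U * real_diag_mat n x * mat_adjoint U) = (\<Sum>i<n. complex_of_real (x i))"
proof -
  have Uc: "U \<in> carrier_mat n n" using U by (simp add: unitary_mat_def)
  have "U * real_diag_mat n x * mat_adjoint U = U * (real_diag_mat n x * mat_adjoint U)"
    using Uc by (simp add: assoc_mult_mat[of _ n n _ n _ n])
  then have "mat_trace (U * real_diag_mat n x * mat_adjoint U) = mat_trace (real_diag_mat n x)"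
    using trace_conj[OF U, of "real_diag_mat n x"] by simp
  also have "\<dots> = (\<Sum>i<n. complex_of_real (x i))" by (simp add: mat_trace_def)
  finally show ?thesis .
qed

lemma TrF:
  assumes U: "unitary_mat n U" and W: "unitary_mat n W"
  shows "mat_trace ((U * real_diag_mat n x * mat_adjoint U) * (W * real_diag_mat n y * mat_adjoint W))
    = (\<Sum>i<n. \<Sum>j<n. complex_of_real (ccf U W i j * x i * y j))"
proof -
  have Uc: "U \<in> carrier_mat n n" using U by (simp add: unitary_mat_def)
  have Wc: "W \<in> carrier_mat n n" using W by (simp add: unitary_mat_def)
  define C where "C = mat_adjoint W * U"
  have Cc: "C \<in> carrier_mat n n" using Uc Wc by (simp add: C_def)
  have CH: "mat_adjoint C = mat_adjoint U * W"
    unfolding C_def by (subst adj_mult[of _ n n _ n]) (use Uc Wc in auto)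
  define R where "R = real_diag_mat n x * (mat_adjoint U * (W * (real_diag_mat n y * mat_adjoint W)))"
  have Rc: "R \<in> carrier_mat n n" using Uc Wc by (simp add: R_def)
  have "(U * real_diag_mat n x * mat_adjoint U) * (W * real_diag_mat n y * mat_adjoint W) = U * R"
    unfolding R_def using Uc Wc by (simp add: assoc_mult_mat[of _ n n _ n _ n])
  then have "mat_trace ((U * real_diag_mat n x * mat_adjoint U) * (W * real_diag_mat n y * mat_adjoint W))
      = mat_trace (R * U)"
    using trace_cyc[OF Uc Rc] by simp
  also have "R * U = real_diag_mat n x * (mat_adjoint C * real_diag_mat n y * C)"
    unfolding R_def CH unfolding C_def using Uc Wc by (simp add: assoc_mult_mat[of _ n n _ n _ n])
  also have "mat_trace \<dots> = (\<Sum>i<n. complex_of_real (x i) * (mat_adjoint C * real_diag_mat n y * C) $$ (i,i))"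
    by (rule tr_diag_left) (use Cc in simp)
  also have "\<dots> = (\<Sum>i<n. complex_of_real (x i) * (\<Sum>j<n. mat_adjoint C $$ (i,j) * y j * cnj (mat_adjoint C $$ (i,j))))"
    by (intro sum.cong refl arg_cong2[where f="(*)"]) (use Cc mult_rdiag_adj_index[of "mat_adjoint C" n n "mat_adjoint C" n _ _ y] in auto)
  also have "\<dots> = (\<Sum>i<n. \<Sum>j<n. complex_of_real (ccf U W i j * x i * y j))"
    unfolding sum_distrib_left
    by (intro sum.cong refl) (use Cc in \<open>auto simp: ccf_def C_def[symmetric] mult_cnj_sq[symmetric] cnj_mult_sq[symmetric] mult_ac\<close>)
  finally show ?thesis .
qed

lemma ccf_sums:
  assumes U: "unitary_mat n U" and W: "unitary_mat n W"
  shows "\<And>i. i < n \<Longrightarrow> (\<Sum>j<n. ccf U W i j) = 1"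
    and "\<And>j. j < n \<Longrightarrow> (\<Sum>i<n. ccf U W i j) = 1"
proof -
  have Uc: "U \<in> carrier_mat n n" using U by (simp add: unitary_mat_def)
  have Wc: "W \<in> carrier_mat n n" using W by (simp add: unitary_mat_def)
  define C where "C = mat_adjoint W * U"
  have Cc: "C \<in> carrier_mat n n" using Uc Wc by (simp add: C_def)
  have CH: "mat_adjoint C = mat_adjoint U * W"
    unfolding C_def by (subst adj_mult[of _ n n _ n]) (use Uc Wc in auto)
  have "C * mat_adjoint C = mat_adjoint W * (U * (mat_adjoint U * W))"
    unfolding CH unfolding C_def using Uc Wc by (simp add: assoc_mult_mat[of _ n n _ n _ n])
  also have "\<dots> = 1\<^sub>m n" using unitary_cancel_left'[OF U, of W n] Wc unitary_left[OF W] by simp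
  finally have CC1: "C * mat_adjoint C = 1\<^sub>m n" .
  have "mat_adjoint C * C = mat_adjoint U * (W * (mat_adjoint W * U))"
    unfolding CH unfolding C_def using Uc Wc by (simp add: assoc_mult_mat[of _ n n _ n _ n])
  also have "\<dots> = 1\<^sub>m n" using unitary_cancel_left'[OF W, of U n] Uc unitary_left[OF U] by simp
  finally have CC2: "mat_adjoint C * mat_adjoint (mat_adjoint C) = 1\<^sub>m n" by simp
  show "(\<Sum>j<n. ccf U W i j) = 1" if i: "i < n" for i
  proof -
    have "complex_of_real (\<Sum>j<n. ccf U W i j) = (\<Sum>j<n. mat_adjoint C $$ (i,j) * cnj (mat_adjoint C $$ (i,j)))"
      using Cc i by (auto simp: ccf_def C_def[symmetric] mult_cnj_sq cnj_mult_sq intro!: sum.cong)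
    also have "\<dots> = (mat_adjoint C * mat_adjoint (mat_adjoint C)) $$ (i,i)"
      by (subst mult_adj_index[of _ n n _ n]) (use Cc i in auto)
    also have "\<dots> = 1" using CC2 i by simp
    finally show ?thesis by (metis of_real_eq_1_iff)
  qed
  show "(\<Sum>i<n. ccf U W i j) = 1" if j: "j < n" for j
  proof -
    have "complex_of_real (\<Sum>i<n. ccf U W i j) = (\<Sum>i<n. C $$ (j,i) * cnj (C $$ (j,i)))"
      using Cc j by (auto simp: ccf_def C_def[symmetric] mult_cnj_sq intro!: sum.cong)
    also have "\<dots> = (C * mat_adjoint C) $$ (j,j)"
      by (subst mult_adj_index[of _ n n _ n]) (use Cc j in auto)
    also have "\<dots> = 1" using CC1 j by simp
    finally show ?thesis by (metis of_real_eq_1_iff)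
  qed
qed

lemma ccf_self:
  assumes U: "unitary_mat n U" "i < n" "j < n"
  shows "ccf U U i j = (if i = j then 1 else 0)"
  using unitary_left[OF U(1)] U by (simp add: ccf_def)

definition PhiF :: "real \<Rightarrow> complex mat \<Rightarrow> complex mat \<Rightarrow> complex mat \<Rightarrow> real" where
  "PhiF u A B Z = 2 * Re (mat_trace (B * Z)) - (1 - u) * Re (mat_trace (mat_adjoint Z * A * Z))
     - u * Re (mat_trace (mat_adjoint Z * Z * B))"

lemma quad_bound:
  assumes k: "(k::real) > 0"
  shows "2 * Re (c * x) - k * (cmod x)^2 \<le> (cmod c)^2 / k"
    and "x = cnj c / complex_of_real k \<Longrightarrow> 2 * Re (c * x) - k * (cmod x)^2 = (cmod c)^2 / k"
proof -
  have e: "(cmod c)^2 / k - (2 * Re (c * x) - k * (cmod x)^2) = ((Re c - k * Re x)^2 + (Im c + k * Im x)^2) / k"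
    unfolding cmod_power2 using k by (simp add: field_simps power2_eq_square)
  have "0 \<le> ((Re c - k * Re x)^2 + (Im c + k * Im x)^2) / k" using k by simp
  then show "2 * Re (c * x) - k * (cmod x)^2 \<le> (cmod c)^2 / k" using e by linarith
  assume x: "x = cnj c / complex_of_real k"
  have "Re x = Re c / k" "Im x = - Im c / k" using x k by (auto simp: Re_divide_of_real Im_divide_of_real)
  then have "(Re c - k * Re x)^2 + (Im c + k * Im x)^2 = 0" using k by simp
  then show "2 * Re (c * x) - k * (cmod x)^2 = (cmod c)^2 / k" using e by simp
qed

lemma tr_sum: "(M::complex mat) \<in> carrier_mat n n \<Longrightarrow> mat_trace M = (\<Sum>j<n. M $$ (j,j))"
  by (simp add: mat_trace_def)

lemma PhiN:
  assumes U: "unitary_mat n U" and W: "unitary_mat n W" and N: "N \<in> carrier_mat n n"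
  shows "PhiF u (U * real_diag_mat n a * mat_adjoint U) (W * real_diag_mat n b * mat_adjoint W)
           (U * N * mat_adjoint W)
      = (\<Sum>i<n. \<Sum>j<n. 2 * Re (complex_of_real (b j) * (mat_adjoint W * U) $$ (j,i) * N $$ (i,j))
            - ((1 - u) * a i + u * b j) * (cmod (N $$ (i,j)))^2)"
proof -
  have Uc: "U \<in> carrier_mat n n" using U by (simp add: unitary_mat_def)
  have Wc: "W \<in> carrier_mat n n" using W by (simp add: unitary_mat_def)
  define C where "C = mat_adjoint W * U"
  have Cc: "C \<in> carrier_mat n n" using Uc Wc by (simp add: C_def)
  have cU: "\<And>X. X \<in> carrier_mat n n \<Longrightarrow> mat_adjoint U * (U * X) = X"
    using unitary_cancel_left[OF U] by blast
  have cW: "\<And>X. X \<in> carrier_mat n n \<Longrightarrow> mat_adjoint W * (W * X) = X"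
    using unitary_cancel_left[OF W] by blast
  define A where "A = U * real_diag_mat n a * mat_adjoint U"
  define B where "B = W * real_diag_mat n b * mat_adjoint W"
  define Z where "Z = U * N * mat_adjoint W"
  have ZH: "mat_adjoint Z = W * (mat_adjoint N * mat_adjoint U)"
  proof -
    have "mat_adjoint Z = mat_adjoint (mat_adjoint W) * mat_adjoint (U * N)"
      unfolding Z_def by (rule adj_mult[of _ n n _ n]) (use Uc Wc N in auto)
    also have "mat_adjoint (U * N) = mat_adjoint N * mat_adjoint U"
      by (rule adj_mult[of _ n n _ n]) (use Uc N in auto)
    finally show ?thesis by simp
  qed
  have e1: "B * Z = W * ((real_diag_mat n b * (C * N)) * mat_adjoint W)"
    unfolding B_def Z_def C_def using Uc Wc N by (simp add: assoc_mult_mat[of _ n n _ n _ n])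
  have e2: "mat_adjoint Z * A * Z = W * ((mat_adjoint N * real_diag_mat n a * N) * mat_adjoint W)"
    unfolding ZH unfolding A_def Z_def using Uc Wc N by (simp add: assoc_mult_mat[of _ n n _ n _ n] cU)
  have e3: "mat_adjoint Z * Z * B = W * ((mat_adjoint N * N * real_diag_mat n b) * mat_adjoint W)"
    unfolding ZH unfolding B_def Z_def using Uc Wc N by (simp add: assoc_mult_mat[of _ n n _ n _ n] cU cW)
  have t1: "mat_trace (B * Z) = (\<Sum>j<n. complex_of_real (b j) * (\<Sum>i<n. C $$ (j,i) * N $$ (i,j)))"
  proof -
    have "mat_trace (B * Z) = mat_trace (real_diag_mat n b * (C * N))"
      unfolding e1 by (rule trace_conj[OF W]) (use Cc N in simp)
    also have "\<dots> = (\<Sum>j<n. complex_of_real (b j) * (C * N) $$ (j,j))"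
      by (rule tr_diag_left) (use Cc N in simp)
    also have "\<dots> = (\<Sum>j<n. complex_of_real (b j) * (\<Sum>i<n. C $$ (j,i) * N $$ (i,j)))"
      by (intro sum.cong refl arg_cong2[where f="(*)"] mult_index[of _ n n _ n]) (use Cc N in auto)
    finally show ?thesis .
  qed
  have t2: "Re (mat_trace (mat_adjoint Z * A * Z)) = (\<Sum>j<n. \<Sum>i<n. a i * (cmod (N $$ (i,j)))^2)"
  proof -
    have "mat_trace (mat_adjoint Z * A * Z) = mat_trace (mat_adjoint N * real_diag_mat n a * N)"
      unfolding e2 by (rule trace_conj[OF W]) (use N in simp)
    also have "\<dots> = (\<Sum>j<n. (mat_adjoint N * real_diag_mat n a * mat_adjoint (mat_adjoint N)) $$ (j,j))"
      by (subst tr_sum[of _ n]) (use N in simp_all)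
    also have "\<dots> = (\<Sum>j<n. \<Sum>i<n. mat_adjoint N $$ (j,i) * a i * cnj (mat_adjoint N $$ (j,i)))"
      by (intro sum.cong refl mult_rdiag_adj_index[of _ n n _ n]) (use N in auto)
    also have "\<dots> = (\<Sum>j<n. \<Sum>i<n. complex_of_real (a i * (cmod (N $$ (i,j)))^2))"
      by (intro sum.cong refl) (use N in \<open>auto simp: cnj_mult_sq[symmetric] mult_ac\<close>)
    finally show ?thesis by simp
  qed
  have t3: "Re (mat_trace (mat_adjoint Z * Z * B)) = (\<Sum>j<n. \<Sum>i<n. (cmod (N $$ (i,j)))^2 * b j)"
  proof -
    have "mat_trace (mat_adjoint Z * Z * B) = mat_trace (mat_adjoint N * N * real_diag_mat n b)"
      unfolding e3 by (rule trace_conj[OF W]) (use N in simp)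
    also have "\<dots> = (\<Sum>j<n. (mat_adjoint N * N) $$ (j,j) * complex_of_real (b j))"
      by (rule tr_diag_right) (use N in simp)
    also have "\<dots> = (\<Sum>j<n. (\<Sum>i<n. mat_adjoint N $$ (j,i) * N $$ (i,j)) * complex_of_real (b j))"
      by (intro sum.cong refl arg_cong2[where f="(*)"] mult_index[of _ n n _ n]) (use N in auto)
    also have "\<dots> = (\<Sum>j<n. \<Sum>i<n. complex_of_real ((cmod (N $$ (i,j)))^2 * b j))"
      by (intro sum.cong refl) (use N in \<open>auto simp: cnj_mult_sq sum_distrib_right\<close>)
    finally show ?thesis by simp
  qed
  have "PhiF u A B Z = 2 * (\<Sum>j<n. \<Sum>i<n. Re (complex_of_real (b j) * C $$ (j,i) * N $$ (i,j)))
      - (1 - u) * (\<Sum>j<n. \<Sum>i<n. a i * (cmod (N $$ (i,j)))^2)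
      - u * (\<Sum>j<n. \<Sum>i<n. (cmod (N $$ (i,j)))^2 * b j)"
    unfolding PhiF_def t2 t3 t1 by (simp add: sum_distrib_left mult_ac)
  also have "\<dots> = (\<Sum>j<n. \<Sum>i<n. 2 * Re (complex_of_real (b j) * C $$ (j,i) * N $$ (i,j))
            - ((1 - u) * a i + u * b j) * (cmod (N $$ (i,j)))^2)"
    by (simp add: sum_distrib_left sum_subtractf algebra_simps)
  also have "\<dots> = (\<Sum>i<n. \<Sum>j<n. 2 * Re (complex_of_real (b j) * C $$ (j,i) * N $$ (i,j))
            - ((1 - u) * a i + u * b j) * (cmod (N $$ (i,j)))^2)"
    by (rule sum.swap)
  finally show ?thesis unfolding A_def B_def Z_def C_def .
qed

definition Gf :: "nat \<Rightarrow> real \<Rightarrow> complex mat \<Rightarrow> complex mat \<Rightarrow> (nat \<Rightarrow> real) \<Rightarrow> (nat \<Rightarrow> real) \<Rightarrow> real" where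
  "Gf n u U W a b = (\<Sum>i<n. \<Sum>j<n. ccf U W i j * (b j)^2 / ((1 - u) * a i + u * b j))"

lemma kpos: "0 \<le> (a::real) \<Longrightarrow> 0 < b \<Longrightarrow> 0 < u \<Longrightarrow> u < 1 \<Longrightarrow> 0 < (1 - u) * a + u * b"
  by (simp add: add_nonneg_pos)

lemma cterm: "(cmod (complex_of_real (b j) * C $$ (j,i)))^2 = (cmod (C $$ (j,i)))^2 * (b j)^2"
  by (simp add: norm_mult power_mult_distrib)

lemma Phi_bound:
  assumes U: "unitary_mat n U" and W: "unitary_mat n W"
    and a: "\<And>i. i < n \<Longrightarrow> 0 \<le> a i" and b: "\<And>j. j < n \<Longrightarrow> 0 < b j"
    and u: "0 < u" "u < 1" and Z: "Z \<in> carrier_mat n n"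
  shows "PhiF u (U * real_diag_mat n a * mat_adjoint U) (W * real_diag_mat n b * mat_adjoint W) Z
     \<le> Gf n u U W a b"
proof -
  have Uc: "U \<in> carrier_mat n n" using U by (simp add: unitary_mat_def)
  have Wc: "W \<in> carrier_mat n n" using W by (simp add: unitary_mat_def)
  define N where "N = mat_adjoint U * Z * W"
  have Nc: "N \<in> carrier_mat n n" using Uc Wc Z by (simp add: N_def)
  have "U * N * mat_adjoint W = U * (mat_adjoint U * (Z * (W * mat_adjoint W)))"
    unfolding N_def using Uc Wc Z by (simp add: assoc_mult_mat[of _ n n _ n _ n])
  also have "\<dots> = Z" using unitary_right[OF W] Z unitary_cancel_left'[OF U, of Z n] by simp
  finally have ZN: "Z = U * N * mat_adjoint W" by simp
  show ?thesis
    unfolding ZN PhiN[OF U W Nc] Gf_def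
  proof (intro sum_mono)
    fix i j assume i: "i \<in> {..<n}" and j: "j \<in> {..<n}"
    have k: "0 < (1 - u) * a i + u * b j" using a b i j u by (simp add: kpos)
    show "2 * Re (complex_of_real (b j) * (mat_adjoint W * U) $$ (j, i) * N $$ (i, j)) -
         ((1 - u) * a i + u * b j) * (cmod (N $$ (i, j)))\<^sup>2
         \<le> ccf U W i j * (b j)\<^sup>2 / ((1 - u) * a i + u * b j)"
      using quad_bound(1)[OF k, of "complex_of_real (b j) * (mat_adjoint W * U) $$ (j, i)" "N $$ (i,j)"]
      by (simp add: cterm ccf_def)
  qed
qed

lemma Phi_attained:
  assumes U: "unitary_mat n U" and W: "unitary_mat n W"
    and a: "\<And>i. i < n \<Longrightarrow> 0 \<le> a i" and b: "\<And>j. j < n \<Longrightarrow> 0 < b j"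
    and u: "0 < u" "u < 1"
  shows "\<exists>Z \<in> carrier_mat n n. PhiF u (U * real_diag_mat n a * mat_adjoint U) (W * real_diag_mat n b * mat_adjoint W) Z
     = Gf n u U W a b"
proof -
  have Uc: "U \<in> carrier_mat n n" using U by (simp add: unitary_mat_def)
  have Wc: "W \<in> carrier_mat n n" using W by (simp add: unitary_mat_def)
  define N where "N = mat n n (\<lambda>(i,j). cnj (complex_of_real (b j) * (mat_adjoint W * U) $$ (j, i)) / complex_of_real ((1 - u) * a i + u * b j))"
  have Nc: "N \<in> carrier_mat n n" by (simp add: N_def)
  have "PhiF u (U * real_diag_mat n a * mat_adjoint U) (W * real_diag_mat n b * mat_adjoint W) (U * N * mat_adjoint W)
     = Gf n u U W a b"
    unfolding PhiN[OF U W Nc] Gf_def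
  proof (intro sum.cong refl)
    fix i j assume i: "i \<in> {..<n}" and j: "j \<in> {..<n}"
    have k: "0 < (1 - u) * a i + u * b j" using a b i j u by (simp add: kpos)
    show "2 * Re (complex_of_real (b j) * (mat_adjoint W * U) $$ (j, i) * N $$ (i, j)) -
         ((1 - u) * a i + u * b j) * (cmod (N $$ (i, j)))\<^sup>2
         = ccf U W i j * (b j)\<^sup>2 / ((1 - u) * a i + u * b j)"
      using quad_bound(2)[OF k, of "N $$ (i,j)" "complex_of_real (b j) * (mat_adjoint W * U) $$ (j, i)"] i j
      by (simp add: cterm ccf_def N_def)
  qed
  moreover have "U * N * mat_adjoint W \<in> carrier_mat n n" using Uc Wc Nc by simp
  ultimately show ?thesis by blast
qed

lemma sum_split:
  fixes f :: "nat \<Rightarrow> 'a::comm_monoid_add"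
  shows "(\<Sum>p<dV*dL. f p) = (\<Sum>i<dV. \<Sum>j<dL. f (i*dL + j))"
proof -
  have "(\<Sum>p<dV*dL. f p) = (\<Sum>i<dV. sum f {i*dL..<i*dL+dL})"
    by (rule sum.nat_group[symmetric])
  also have "\<dots> = (\<Sum>i<dV. \<Sum>j<dL. f (i*dL + j))"
  proof (rule sum.cong[OF refl])
    fix i
    have "sum f {i*dL..<i*dL+dL} = sum f {0 + i*dL..<dL + i*dL}" by (simp add: add.commute)
    also have "\<dots> = (\<Sum>j\<in>{0..<dL}. f (j + i*dL))" by (rule sum.shift_bounds_nat_ivl)
    also have "\<dots> = (\<Sum>j<dL. f (i*dL + j))" by (simp add: atLeast0LessThan add.commute)
    finally show "sum f {i*dL..<i*dL+dL} = (\<Sum>j<dL. f (i*dL + j))" .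
  qed
  finally show ?thesis .
qed

lemma divmod_simps:
  assumes "j < (dL::nat)"
  shows "(i*dL + j) div dL = i" "(i*dL + j) mod dL = j"
  using assms by auto

lemma idx_lt: "i < dV \<Longrightarrow> j < dL \<Longrightarrow> i*dL + j < dV*(dL::nat)"
proof -
  assume "i < dV" "j < dL"
  then have "i*dL + j < i*dL + dL" by simp
  also have "\<dots> = (i+1)*dL" by simp
  also have "\<dots> \<le> dV*dL" using \<open>i < dV\<close> by (intro mult_right_mono) auto
  finally show ?thesis .
qed

definition ext_mat :: "nat \<Rightarrow> nat \<Rightarrow> complex mat \<Rightarrow> complex mat" where
  "ext_mat dV dL Z = mat (dV*dL) (dV*dL) (\<lambda>(p,q). if p mod dL = q mod dL then Z $$ (p div dL, q div dL) else 0)"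

lemma ext_carrier[simp]: "ext_mat dV dL Z \<in> carrier_mat (dV*dL) (dV*dL)"
  by (simp add: ext_mat_def)

lemma ptrace_carrier[simp]: "ptrace_L dV dL X \<in> carrier_mat dV dV"
  by (simp add: ptrace_L_def)

lemma ptrace_index: "i < dV \<Longrightarrow> i' < dV \<Longrightarrow> ptrace_L dV dL X $$ (i,i') = (\<Sum>j<dL. X $$ (i * dL + j, i' * dL + j))"
  by (simp add: ptrace_L_def)

lemma tr_ext:
  assumes X: "X \<in> carrier_mat (dV*dL) (dV*dL)" and Y: "Y \<in> carrier_mat dV dV"
  shows "mat_trace (X * ext_mat dV dL Y) = mat_trace (ptrace_L dV dL X * Y)"
proof -
  let ?n = "dV*dL"
  have "mat_trace (X * ext_mat dV dL Y) = (\<Sum>p<?n. \<Sum>q<?n. X $$ (p,q) * ext_mat dV dL Y $$ (q,p))"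
    using X by (simp add: mat_trace_def mult_index[of _ ?n ?n _ ?n])
  also have "\<dots> = (\<Sum>i<dV. \<Sum>j<dL. \<Sum>i'<dV. \<Sum>j'<dL. X $$ (i*dL+j, i'*dL+j') * ext_mat dV dL Y $$ (i'*dL+j', i*dL+j))"
    by (simp add: sum_split)
  also have "\<dots> = (\<Sum>i<dV. \<Sum>j<dL. \<Sum>i'<dV. \<Sum>j'<dL. if j' = j then X $$ (i*dL+j, i'*dL+j) * Y $$ (i', i) else 0)"
    by (intro sum.cong refl) (auto simp: ext_mat_def idx_lt)
  also have "\<dots> = (\<Sum>i<dV. \<Sum>j<dL. \<Sum>i'<dV. X $$ (i*dL+j, i'*dL+j) * Y $$ (i', i))"
    by (intro sum.cong refl) (simp add: sum.delta)
  also have "\<dots> = (\<Sum>i<dV. \<Sum>i'<dV. (\<Sum>j<dL. X $$ (i*dL+j, i'*dL+j)) * Y $$ (i', i))"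
    by (rule sum.cong[OF refl], subst sum.swap) (simp add: sum_distrib_right)
  also have "\<dots> = (\<Sum>i<dV. (ptrace_L dV dL X * Y) $$ (i,i))"
    by (intro sum.cong refl, subst mult_index[of _ dV dV _ dV]) (use Y in \<open>auto simp: ptrace_index\<close>)
  also have "\<dots> = mat_trace (ptrace_L dV dL X * Y)"
    by (rule tr_sum[symmetric]) (use Y in simp)
  finally show ?thesis .
qed

lemma div_lt: "p < dV*dL \<Longrightarrow> p div dL < (dV::nat)"
  by (simp add: less_mult_imp_div_less)

lemma mod_lt: "p < dV*dL \<Longrightarrow> p mod dL < (dL::nat)"
  by (metis mod_less_divisor mult_0_right not_less_zero gr0I)

lemma ext_adj:
  assumes Z: "Z \<in> carrier_mat dV dV"
  shows "mat_adjoint (ext_mat dV dL Z) = ext_mat dV dL (mat_adjoint Z)"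
  by (rule eq_matI) (use Z in \<open>auto simp: ext_mat_def div_lt\<close>)

lemma ext_mult:
  assumes Z: "Z \<in> carrier_mat dV dV" and Y: "Y \<in> carrier_mat dV dV"
  shows "ext_mat dV dL Z * ext_mat dV dL Y = ext_mat dV dL (Z * Y)"
proof (rule eq_matI)
  fix p q assume "p < dim_row (ext_mat dV dL (Z * Y))" "q < dim_col (ext_mat dV dL (Z * Y))"
  then have pq: "p < dV*dL" "q < dV*dL" by (auto simp: ext_mat_def)
  have "(ext_mat dV dL Z * ext_mat dV dL Y) $$ (p,q) = (\<Sum>r<dV*dL. ext_mat dV dL Z $$ (p,r) * ext_mat dV dL Y $$ (r,q))"
    by (rule mult_index) (use pq in auto)
  also have "\<dots> = (\<Sum>i<dV. \<Sum>j<dL. ext_mat dV dL Z $$ (p,i*dL+j) * ext_mat dV dL Y $$ (i*dL+j,q))"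
    by (rule sum_split)
  also have "\<dots> = (\<Sum>i<dV. \<Sum>j<dL. if j = p mod dL then (if p mod dL = q mod dL then Z $$ (p div dL, i) * Y $$ (i, q div dL) else 0) else 0)"
    by (intro sum.cong refl) (use pq in \<open>auto simp: ext_mat_def idx_lt\<close>)
  also have "\<dots> = (\<Sum>i<dV. if p mod dL = q mod dL then Z $$ (p div dL, i) * Y $$ (i, q div dL) else 0)"
    by (intro sum.cong refl) (use mod_lt[OF pq(1)] in simp)
  also have "\<dots> = ext_mat dV dL (Z * Y) $$ (p,q)"
    using pq Z Y div_lt[OF pq(1)] div_lt[OF pq(2)] by (simp add: ext_mat_def mult_index[of _ dV dV _ dV] del: index_mult_mat(1))
  finally show "(ext_mat dV dL Z * ext_mat dV dL Y) $$ (p,q) = ext_mat dV dL (Z * Y) $$ (p,q)" .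
qed (auto simp: ext_mat_def)

definition slice_vec :: "nat \<Rightarrow> nat \<Rightarrow> complex vec \<Rightarrow> nat \<Rightarrow> complex vec" where
  "slice_vec dV dL v j = vec (dV*dL) (\<lambda>p. if p mod dL = j then v $ (p div dL) else 0)"

lemma slice_carrier[simp]: "slice_vec dV dL v j \<in> carrier_vec (dV*dL)"
  by (simp add: slice_vec_def)

lemma quad_sum: "(v::complex vec) \<in> carrier_vec n \<Longrightarrow> (M::complex mat) \<in> carrier_mat n n \<Longrightarrow>
   conjugate v \<bullet> (M *\<^sub>v v) = (\<Sum>p<n. \<Sum>q<n. cnj (v $ p) * M $$ (p,q) * v $ q)"
  by (auto simp: scalar_prod_def atLeast0LessThan sum_distrib_left mult_ac intro!: sum.cong)

lemma dd_sum: "j < dL \<Longrightarrow> (\<Sum>j1<dL. \<Sum>i'<dV. \<Sum>j2<(dL::nat). if j1 = j then if j2 = j then f i' else 0 else (0::complex)) = (\<Sum>i'<(dV::nat). f i')"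
proof -
  assume j: "j < dL"
  have "(\<Sum>j1<dL. \<Sum>i'<dV. \<Sum>j2<(dL::nat). if j1 = j then if j2 = j then f i' else 0 else (0::complex))
     = (\<Sum>j1<dL. if j1 = j then (\<Sum>i'<dV. f i') else 0)"
    by (rule sum.cong[OF refl]) (use j in \<open>auto simp: sum.delta\<close>)
  also have "\<dots> = (\<Sum>i'<(dV::nat). f i')" using j by (simp add: sum.delta)
  finally show ?thesis .
qed

lemma ptrace_quad:
  assumes X: "X \<in> carrier_mat (dV*dL) (dV*dL)" and v: "v \<in> carrier_vec dV"
  shows "conjugate v \<bullet> (ptrace_L dV dL X *\<^sub>v v) = (\<Sum>j<dL. conjugate (slice_vec dV dL v j) \<bullet> (X *\<^sub>v slice_vec dV dL v j))"
proof -
  have "conjugate v \<bullet> (ptrace_L dV dL X *\<^sub>v v) = (\<Sum>i<dV. \<Sum>i'<dV. cnj (v $ i) * (\<Sum>j<dL. X $$ (i*dL+j, i'*dL+j)) * v $ i')"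
    using v by (simp add: quad_sum[of _ dV] ptrace_index)
  also have "\<dots> = (\<Sum>j<dL. \<Sum>i<dV. \<Sum>i'<dV. cnj (v $ i) * X $$ (i*dL+j, i'*dL+j) * v $ i')"
    by (simp add: sum_distrib_left sum_distrib_right sum.swap[of _ "{..<dL}"])
  also have "\<dots> = (\<Sum>j<dL. conjugate (slice_vec dV dL v j) \<bullet> (X *\<^sub>v slice_vec dV dL v j))"
  proof (rule sum.cong[OF refl])
    fix j assume j: "j \<in> {..<dL}"
    have "conjugate (slice_vec dV dL v j) \<bullet> (X *\<^sub>v slice_vec dV dL v j)
       = (\<Sum>p<dV*dL. \<Sum>q<dV*dL. cnj (slice_vec dV dL v j $ p) * X $$ (p,q) * slice_vec dV dL v j $ q)"
      by (rule quad_sum) (use X in auto)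
    also have "\<dots> = (\<Sum>i<dV. \<Sum>j1<dL. \<Sum>i'<dV. \<Sum>j2<dL. 
        (if j1 = j then (if j2 = j then cnj (v $ i) * X $$ (i*dL+j, i'*dL+j) * v $ i' else 0) else 0))"
      by (simp add: sum_split) (intro sum.cong refl, auto simp: slice_vec_def idx_lt)
    also have "\<dots> = (\<Sum>i<dV. \<Sum>i'<dV. cnj (v $ i) * X $$ (i*dL+j, i'*dL+j) * v $ i')"
      using j by (simp add: dd_sum)
    finally show "(\<Sum>i<dV. \<Sum>i'<dV. cnj (v $ i) * X $$ (i*dL+j, i'*dL+j) * v $ i') =
      conjugate (slice_vec dV dL v j) \<bullet> (X *\<^sub>v slice_vec dV dL v j)" by simp
  qed
  finally show ?thesis .
qed

definition PsiF :: "nat \<Rightarrow> complex mat \<Rightarrow> complex mat \<Rightarrow> (nat \<Rightarrow> real) \<Rightarrow> (nat \<Rightarrow> real) \<Rightarrow> real \<Rightarrow> real" where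
  "PsiF n U W a b u = (\<Sum>i<n. \<Sum>j<n. ccf U W i j * (- a i * ln ((1 - u) * a i + u * b j)))"

definition DerF :: "nat \<Rightarrow> complex mat \<Rightarrow> complex mat \<Rightarrow> (nat \<Rightarrow> real) \<Rightarrow> (nat \<Rightarrow> real) \<Rightarrow> real \<Rightarrow> real" where
  "DerF n U W a b u = (\<Sum>i<n. \<Sum>j<n. ccf U W i j * (a i * (a i - b j) / ((1 - u) * a i + u * b j)))"

lemma term_deriv:
  assumes a: "0 \<le> (a::real)" and b: "0 < b" and u: "0 \<le> u" "u \<le> 1"
  shows "((\<lambda>u. - a * ln ((1 - u) * a + u * b)) has_real_derivative (a * (a - b) / ((1 - u) * a + u * b))) (at u)"
proof (cases "a = 0")
  case True
  then show ?thesis by simp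
next
  case False
  then have a': "0 < a" using a by simp
  have k: "0 < (1 - u) * a + u * b"
  proof (cases "u = 0")
    case True then show ?thesis using a' by simp
  next
    case False then have "0 < u * b" using u b by simp
    moreover have "0 \<le> (1 - u) * a" using u a by simp
    ultimately show ?thesis by linarith
  qed
  have "((\<lambda>u. - a * ln ((1 - u) * a + u * b)) has_real_derivative (- a * ((b - a) / ((1 - u) * a + u * b)))) (at u)"
    by (rule derivative_eq_intros refl | use k in simp)+
  then show ?thesis by (simp add: field_simps)
qed

lemma Psi_deriv:
  assumes a: "\<And>i. i < n \<Longrightarrow> 0 \<le> a i" and b: "\<And>j. j < n \<Longrightarrow> 0 < b j" and u: "0 \<le> u" "u \<le> 1"
  shows "(PsiF n U W a b has_real_derivative DerF n U W a b u) (at u)"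
  unfolding PsiF_def DerF_def
  by (intro DERIV_sum DERIV_cmult term_deriv) (use a b u in auto)

lemma Psi_cont:
  assumes a: "\<And>i. i < n \<Longrightarrow> 0 \<le> a i" and b: "\<And>j. j < n \<Longrightarrow> 0 < b j"
  shows "continuous_on {0..1} (PsiF n U W a b)"
  by (rule DERIV_continuous_on, rule has_field_derivative_at_within, rule Psi_deriv) (use a b in auto)

lemma Psi_0: "PsiF n U W a b 0 = (\<Sum>i<n. \<Sum>j<n. ccf U W i j * (- a i * ln (a i)))"
  by (simp add: PsiF_def)

lemma Psi_1: "PsiF n U W a b 1 = (\<Sum>i<n. \<Sum>j<n. ccf U W i j * (- a i * ln (b j)))"
  by (simp add: PsiF_def)

lemma term_ident:
  assumes "0 < (u::real)" "u < 1" "0 < (1 - u) * a + u * b"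
  shows "a * (a - b) / ((1 - u) * a + u * b) = a / (1 - u) - b / (1 - u)^2 + u / (1 - u)^2 * (b^2 / ((1 - u) * a + u * b))"
proof -
  define c where "c = 1 - u"
  define k where "k = (1 - u) * a + u * b"
  have c: "c \<noteq> 0" using assms(2) unfolding c_def by linarith
  have k: "k \<noteq> 0" using assms(3) unfolding k_def by linarith
  have "a / c - b / c^2 + u / c^2 * (b^2 / k) = (a * c * k - b * k + u * b^2) / (c^2 * k)"
    using c k by (simp add: field_simps power2_eq_square)
  also have "a * c * k - b * k + u * b^2 = a * (a - b) * c^2"
    unfolding c_def k_def by (simp add: algebra_simps power2_eq_square)
  also have "a * (a - b) * c^2 / (c^2 * k) = a * (a - b) / k"
    using c k by (simp add: power2_eq_square)
  finally show ?thesis unfolding c_def k_def by simp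
qed

lemma Der_formula:
  assumes U: "unitary_mat n U" and W: "unitary_mat n W"
    and a: "\<And>i. i < n \<Longrightarrow> 0 \<le> a i" and b: "\<And>j. j < n \<Longrightarrow> 0 < b j" and u: "0 < u" "u < 1"
  shows "DerF n U W a b u = (\<Sum>i<n. a i) / (1 - u) - (\<Sum>j<n. b j) / (1 - u)^2 + u / (1 - u)^2 * Gf n u U W a b"
proof -
  have "DerF n U W a b u = (\<Sum>i<n. \<Sum>j<n. ccf U W i j * (a i / (1 - u) - b j / (1 - u)^2
        + u / (1 - u)^2 * (b j ^2 / ((1 - u) * a i + u * b j))))"
    unfolding DerF_def by (intro sum.cong refl arg_cong2[where f="(*)"] term_ident u kpos) (use a b u in auto)
  also have "\<dots> = (\<Sum>i<n. \<Sum>j<n. ccf U W i j * a i / (1 - u)) - (\<Sum>i<n. \<Sum>j<n. ccf U W i j * b j / (1 - u)^2)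
        + (\<Sum>i<n. \<Sum>j<n. u / (1 - u)^2 * (ccf U W i j * b j ^2 / ((1 - u) * a i + u * b j)))"
    by (simp only: sum.distrib[symmetric] sum_subtractf[symmetric]) (intro sum.cong refl, simp add: algebra_simps)
  also have "(\<Sum>i<n. \<Sum>j<n. ccf U W i j * a i / (1 - u)) = (\<Sum>i<n. a i * (\<Sum>j<n. ccf U W i j) / (1 - u))"
    by (intro sum.cong refl) (simp add: sum_distrib_left sum_divide_distrib mult_ac)
  also have "\<dots> = (\<Sum>i<n. a i / (1 - u))" using ccf_sums(1)[OF U W] by simp
  also have "(\<Sum>i<n. \<Sum>j<n. ccf U W i j * b j / (1 - u)^2) = (\<Sum>j<n. \<Sum>i<n. ccf U W i j * b j / (1 - u)^2)"
    by (rule sum.swap)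
  also have "\<dots> = (\<Sum>j<n. b j * (\<Sum>i<n. ccf U W i j) / (1 - u)^2)"
    by (intro sum.cong refl) (simp add: sum_distrib_left sum_divide_distrib mult_ac)
  also have "\<dots> = (\<Sum>j<n. b j / (1 - u)^2)" using ccf_sums(2)[OF U W] by simp
  also have "(\<Sum>i<n. \<Sum>j<n. u / (1 - u)^2 * (ccf U W i j * b j ^2 / ((1 - u) * a i + u * b j))) = u / (1 - u)^2 * Gf n u U W a b"
    unfolding Gf_def by (simp add: sum_distrib_left)
  also have "(\<Sum>i<n. a i / (1 - u)) = (\<Sum>i<n. a i) / (1 - u)" by (simp add: sum_divide_distrib)
  also have "(\<Sum>j<n. b j / (1 - u)^2) = (\<Sum>j<n. b j) / (1 - u)^2" by (simp add: sum_divide_distrib)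
  finally show ?thesis .
qed

lemma D_formula:
  assumes U: "unitary_mat n U" and W: "unitary_mat n W"
  shows "Re (mat_trace ((U * real_diag_mat n a * mat_adjoint U) * (U * real_diag_mat n (ln \<circ> a) * mat_adjoint U)))
       - Re (mat_trace ((U * real_diag_mat n a * mat_adjoint U) * (W * real_diag_mat n (ln \<circ> b) * mat_adjoint W)))
       = PsiF n U W a b 1 - PsiF n U W a b 0"
proof -
  have "Re (mat_trace ((U * real_diag_mat n a * mat_adjoint U) * (U * real_diag_mat n (ln \<circ> a) * mat_adjoint U)))
      = (\<Sum>i<n. \<Sum>j<n. ccf U U i j * a i * ln (a j))"
    unfolding TrF[OF U U] by simp
  also have "\<dots> = (\<Sum>i<n. a i * ln (a i))"
  proof (rule sum.cong[OF refl])
    fix i assume i: "i \<in> {..<n}"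
    have "(\<Sum>j<n. ccf U U i j * a i * ln (a j)) = (\<Sum>j<n. if j = i then a i * ln (a j) else 0)"
      by (rule sum.cong) (use i in \<open>auto simp: ccf_self[OF U]\<close>)
    also have "\<dots> = a i * ln (a i)" using i by simp
    finally show "(\<Sum>j<n. ccf U U i j * a i * ln (a j)) = a i * ln (a i)" .
  qed
  also have "\<dots> = (\<Sum>i<n. \<Sum>j<n. ccf U W i j * (a i * ln (a i)))"
    by (intro sum.cong refl) (simp add: sum_distrib_right[symmetric] ccf_sums(1)[OF U W])
  finally have t1: "Re (mat_trace ((U * real_diag_mat n a * mat_adjoint U) * (U * real_diag_mat n (ln \<circ> a) * mat_adjoint U)))
      = - PsiF n U W a b 0" by (simp add: Psi_0 sum_negf[symmetric])
  have t2: "Re (mat_trace ((U * real_diag_mat n a * mat_adjoint U) * (W * real_diag_mat n (ln \<circ> b) * mat_adjoint W)))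
      = - PsiF n U W a b 1"
    unfolding TrF[OF U W] Psi_1 by (simp add: sum_negf[symmetric] mult_ac)
  show ?thesis using t1 t2 by simp
qed

lemma transfer_Phi:
  assumes X: "X \<in> carrier_mat (dV*dL) (dV*dL)" and Y: "Y \<in> carrier_mat (dV*dL) (dV*dL)"
    and Z: "Z \<in> carrier_mat dV dV"
  shows "PhiF u X Y (ext_mat dV dL Z) = PhiF u (ptrace_L dV dL X) (ptrace_L dV dL Y) Z"
proof -
  let ?n = "dV*dL"
  let ?E = "ext_mat dV dL Z"
  have E: "?E \<in> carrier_mat ?n ?n" by simp
  have EEH: "?E * mat_adjoint ?E = ext_mat dV dL (Z * mat_adjoint Z)"
    unfolding ext_adj[OF Z] by (rule ext_mult) (use Z in auto)
  have EHE: "mat_adjoint ?E * ?E = ext_mat dV dL (mat_adjoint Z * Z)"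
    unfolding ext_adj[OF Z] by (rule ext_mult) (use Z in auto)
  have t1: "mat_trace (Y * ?E) = mat_trace (ptrace_L dV dL Y * Z)" by (rule tr_ext[OF Y Z])
  have "mat_trace (mat_adjoint ?E * X * ?E) = mat_trace (?E * (mat_adjoint ?E * X))"
    by (rule trace_cyc[of _ ?n ?n]) (use X E in auto)
  also have "mat_trace (?E * (mat_adjoint ?E * X)) = mat_trace ((?E * mat_adjoint ?E) * X)"
    using X E by (simp add: assoc_mult_mat[of _ ?n ?n _ ?n _ ?n])
  also have "\<dots> = mat_trace (X * (?E * mat_adjoint ?E))"
    by (rule trace_cyc[of _ ?n ?n]) (use X E in auto)
  also have "\<dots> = mat_trace (ptrace_L dV dL X * (Z * mat_adjoint Z))"
    unfolding EEH by (rule tr_ext[OF X]) (use Z in simp)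
  also have "\<dots> = mat_trace ((ptrace_L dV dL X * Z) * mat_adjoint Z)"
    using Z by (simp add: assoc_mult_mat[of _ dV dV _ dV _ dV])
  also have "\<dots> = mat_trace (mat_adjoint Z * (ptrace_L dV dL X * Z))"
    by (rule trace_cyc[of _ dV dV]) (use Z in auto)
  also have "\<dots> = mat_trace (mat_adjoint Z * ptrace_L dV dL X * Z)"
    using Z by (simp add: assoc_mult_mat[of _ dV dV _ dV _ dV])
  finally have t2: "mat_trace (mat_adjoint ?E * X * ?E) = mat_trace (mat_adjoint Z * ptrace_L dV dL X * Z)" .
  have "mat_trace (mat_adjoint ?E * ?E * Y) = mat_trace (Y * (mat_adjoint ?E * ?E))"
    by (rule trace_cyc[of _ ?n ?n]) (use Y E in auto)
  also have "\<dots> = mat_trace (ptrace_L dV dL Y * (mat_adjoint Z * Z))"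
    unfolding EHE by (rule tr_ext[OF Y]) (use Z in simp)
  also have "\<dots> = mat_trace (mat_adjoint Z * Z * ptrace_L dV dL Y)"
    by (rule trace_cyc[of _ dV dV]) (use Z in auto)
  finally have t3: "mat_trace (mat_adjoint ?E * ?E * Y) = mat_trace (mat_adjoint Z * Z * ptrace_L dV dL Y)" .
  show ?thesis unfolding PhiF_def t1 t2 t3 ..
qed

lemma ptrace_dims[simp]: "dim_row (ptrace_L dV dL X) = dV" "dim_col (ptrace_L dV dL X) = dV"
  by (auto simp: ptrace_L_def)

lemma herm_entry: "hermitian_mat n X \<Longrightarrow> p < n \<Longrightarrow> q < n \<Longrightarrow> X $$ (p,q) = cnj (X $$ (q,p))"
  unfolding hermitian_mat_def by (metis adj_index carrier_matD(1,2))

lemma ptrace_herm: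
  assumes X: "hermitian_mat (dV*dL) X"
  shows "hermitian_mat dV (ptrace_L dV dL X)"
  unfolding hermitian_mat_def
proof (intro conjI)
  show "ptrace_L dV dL X \<in> carrier_mat dV dV" by simp
  show "mat_adjoint (ptrace_L dV dL X) = ptrace_L dV dL X"
  proof (rule eq_matI)
    fix i i' assume "i < dim_row (ptrace_L dV dL X)" "i' < dim_col (ptrace_L dV dL X)"
    then have ii: "i < dV" "i' < dV" by (auto simp: ptrace_L_def)
    have "mat_adjoint (ptrace_L dV dL X) $$ (i,i') = cnj (\<Sum>j<dL. X $$ (i' * dL + j, i * dL + j))"
      using ii by (simp add: ptrace_index)
    also have "\<dots> = (\<Sum>j<dL. X $$ (i * dL + j, i' * dL + j))"
      unfolding cnj_sum
    proof (rule sum.cong[OF refl])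
      fix j assume "j \<in> {..<dL}"
      then have "i * dL + j < dV*dL" "i' * dL + j < dV*dL" using ii by (auto simp: idx_lt)
      then show "cnj (X $$ (i' * dL + j, i * dL + j)) = X $$ (i * dL + j, i' * dL + j)"
        using herm_entry[OF X, of "i * dL + j" "i' * dL + j"] by simp
    qed
    finally show "mat_adjoint (ptrace_L dV dL X) $$ (i,i') = ptrace_L dV dL X $$ (i,i')"
      using ii by (simp add: ptrace_index)
  qed auto
qed

lemma ext_one: "ext_mat dV dL (1\<^sub>m dV) = 1\<^sub>m (dV*dL)"
proof (rule eq_matI)
  fix p q assume "p < dim_row (1\<^sub>m (dV*dL) :: complex mat)" "q < dim_col (1\<^sub>m (dV*dL) :: complex mat)"
  then have pq: "p < dV*dL" "q < dV*dL" by auto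
  have "(p = q) = (p div dL = q div dL \<and> p mod dL = q mod dL)"
  proof
    assume "p div dL = q div dL \<and> p mod dL = q mod dL"
    moreover have "p = p div dL * dL + p mod dL" "q = q div dL * dL + q mod dL" by simp_all
    ultimately show "p = q" by simp
  qed simp
  then show "ext_mat dV dL (1\<^sub>m dV) $$ (p,q) = 1\<^sub>m (dV*dL) $$ (p,q)"
    using pq div_lt[OF pq(1)] div_lt[OF pq(2)] by (auto simp: ext_mat_def)
qed (auto simp: ext_mat_def)

lemma ptrace_trace:
  assumes X: "X \<in> carrier_mat (dV*dL) (dV*dL)"
  shows "mat_trace (ptrace_L dV dL X) = mat_trace X"
  using tr_ext[OF X, of "1\<^sub>m dV"] X right_mult_one_mat[OF ptrace_carrier[of dV dL X]] by (simp add: ext_one)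

lemma ptrace_pd:
  assumes X: "pd_mat (dV*dL) X" and dL: "0 < dL"
  shows "pd_mat dV (ptrace_L dV dL X)"
  unfolding pd_mat_def
proof (intro conjI ballI impI)
  show "hermitian_mat dV (ptrace_L dV dL X)" using X ptrace_herm by (simp add: pd_mat_def)
  fix v :: "complex vec" assume v: "v \<in> carrier_vec dV" and v0: "v \<noteq> 0\<^sub>v dV"
  have Xc: "X \<in> carrier_mat (dV*dL) (dV*dL)" using X by (simp add: pd_mat_def hermitian_mat_def)
  have nn: "0 \<le> Re (conjugate (slice_vec dV dL v j) \<bullet> (X *\<^sub>v slice_vec dV dL v j))" for j
  proof (cases "slice_vec dV dL v j = 0\<^sub>v (dV*dL)")
    case True then show ?thesis by (simp add: scalar_prod_def)
  next
    case False then show ?thesis using X by (simp add: pd_mat_def less_imp_le)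
  qed
  obtain i where i: "i < dV" "v $ i \<noteq> 0" using v v0 by (metis eq_vecI carrier_vecD index_zero_vec(1,2))
  have "slice_vec dV dL v 0 $ (i*dL) = v $ i" using i dL idx_lt[of i dV 0 dL] by (simp add: slice_vec_def)
  then have "slice_vec dV dL v 0 \<noteq> 0\<^sub>v (dV*dL)" using i idx_lt[of i dV 0 dL] dL by auto
  then have pos0: "0 < Re (conjugate (slice_vec dV dL v 0) \<bullet> (X *\<^sub>v slice_vec dV dL v 0))"
    using X by (simp add: pd_mat_def)
  have "Re (conjugate v \<bullet> (ptrace_L dV dL X *\<^sub>v v)) = (\<Sum>j<dL. Re (conjugate (slice_vec dV dL v j) \<bullet> (X *\<^sub>v slice_vec dV dL v j)))"
    unfolding ptrace_quad[OF Xc v] by simp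
  also have "\<dots> \<ge> Re (conjugate (slice_vec dV dL v 0) \<bullet> (X *\<^sub>v slice_vec dV dL v 0))"
    by (rule member_le_sum) (use dL nn in auto)
  finally show "0 < Re (conjugate v \<bullet> (ptrace_L dV dL X *\<^sub>v v))" using pos0 by linarith
qed

lemma eig_sum:
  assumes "unitary_mat n U" "A = U * real_diag_mat n a * mat_adjoint U" "mat_trace A = 1"
  shows "(\<Sum>i<n. a i) = 1"
proof -
  have "complex_of_real (\<Sum>i<n. a i) = 1" using tr_UDU[OF assms(1), of a] assms(2,3) by simp
  then show ?thesis by (metis of_real_eq_1_iff)
qed

theorem mainTheorem1:
  fixes dV dL :: nat and etaV :: "complex mat" and rho :: "'t \<Rightarrow> complex mat"
    and theta :: 't and eta :: "complex mat"
  assumes "density_mat dV etaV"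
    and "\<And>th. density_mat (dV * dL) (rho th)"
    and "\<And>th. pd_mat (dV * dL) (rho th)"
    and "eta \<in> joint_set dV dL etaV"
  shows "log_likelihood dV dL etaV (rho theta) \<ge> QELBO etaV eta (rho theta)"
proof -
  define n where "n = dV * dL"
  define R where "R = rho theta"
  define RV where "RV = ptrace_L dV dL R"
  have eta: "density_mat n eta" and etaV: "ptrace_L dV dL eta = etaV"
    using assms(4) by (auto simp: joint_set_def n_def)
  have Rd: "density_mat n R" and Rp: "pd_mat n R" using assms(2,3) by (auto simp: R_def n_def)
  have eta_h: "hermitian_mat n eta" and eta_p: "psd_mat n eta" and eta_t: "mat_trace eta = 1"
    using eta by (auto simp: density_mat_def psd_mat_def)
  have R_h: "hermitian_mat n R" and R_t: "mat_trace R = 1"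
    using Rd by (auto simp: density_mat_def psd_mat_def)
  have Rc: "R \<in> carrier_mat n n" using R_h by (simp add: hermitian_mat_def)
  have etac: "eta \<in> carrier_mat n n" using eta_h by (simp add: hermitian_mat_def)
  have V_h: "hermitian_mat dV etaV" and V_p: "psd_mat dV etaV" and V_t: "mat_trace etaV = 1"
    using assms(1) by (auto simp: density_mat_def psd_mat_def)
  have dL: "0 < dL"
  proof (rule ccontr)
    assume "\<not> 0 < dL"
    then have "n = 0" by (simp add: n_def)
    then have "mat_trace R = 0" using Rc by (simp add: mat_trace_def)
    then show False using R_t by simp
  qed
  have RV_h: "hermitian_mat dV RV" unfolding RV_def using R_h ptrace_herm n_def by simp
  have RV_p: "pd_mat dV RV" unfolding RV_def using Rp ptrace_pd dL n_def by simp
  have RV_t: "mat_trace RV = 1" unfolding RV_def using ptrace_trace[of R dV dL] Rc R_t n_def by simp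
  obtain U1 a1 where U1: "unitary_mat n U1" "eta = U1 * real_diag_mat n a1 * mat_adjoint U1"
      "mat_log eta = U1 * real_diag_mat n (ln \<circ> a1) * mat_adjoint U1"
    using mat_fun_spec[OF eta_h, of ln] unfolding mat_log_def by blast
  obtain W1 b1 where W1: "unitary_mat n W1" "R = W1 * real_diag_mat n b1 * mat_adjoint W1"
      "mat_log R = W1 * real_diag_mat n (ln \<circ> b1) * mat_adjoint W1"
    using mat_fun_spec[OF R_h, of ln] unfolding mat_log_def by blast
  obtain U2 a2 where U2: "unitary_mat dV U2" "etaV = U2 * real_diag_mat dV a2 * mat_adjoint U2"
      "mat_log etaV = U2 * real_diag_mat dV (ln \<circ> a2) * mat_adjoint U2"
    using mat_fun_spec[OF V_h, of ln] unfolding mat_log_def by blast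
  obtain W2 b2 where W2: "unitary_mat dV W2" "RV = W2 * real_diag_mat dV b2 * mat_adjoint W2"
      "mat_log RV = W2 * real_diag_mat dV (ln \<circ> b2) * mat_adjoint W2"
    using mat_fun_spec[OF RV_h, of ln] unfolding mat_log_def by blast
  have a1: "\<And>i. i < n \<Longrightarrow> 0 \<le> a1 i" using psd_eig_nonneg[OF eta_p U1(1,2)] by blast
  have b1: "\<And>j. j < n \<Longrightarrow> 0 < b1 j" using pd_eig_pos[OF Rp W1(1,2)] by blast
  have a2: "\<And>i. i < dV \<Longrightarrow> 0 \<le> a2 i" using psd_eig_nonneg[OF V_p U2(1,2)] by blast
  have b2: "\<And>j. j < dV \<Longrightarrow> 0 < b2 j" using pd_eig_pos[OF RV_p W2(1,2)] by blast
  have sa1: "(\<Sum>i<n. a1 i) = 1" by (rule eig_sum[OF U1(1,2) eta_t])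
  have sb1: "(\<Sum>i<n. b1 i) = 1" by (rule eig_sum[OF W1(1,2) R_t])
  have sa2: "(\<Sum>i<dV. a2 i) = 1" by (rule eig_sum[OF U2(1,2) V_t])
  have sb2: "(\<Sum>i<dV. b2 i) = 1" by (rule eig_sum[OF W2(1,2) RV_t])
  define f where "f = (\<lambda>u. PsiF n U1 W1 a1 b1 u - PsiF dV U2 W2 a2 b2 u)"
  have Dbig: "Re (mat_trace (eta * mat_log eta)) - Re (mat_trace (eta * mat_log R)) = PsiF n U1 W1 a1 b1 1 - PsiF n U1 W1 a1 b1 0"
    using D_formula[OF U1(1) W1(1), of a1 b1] U1 W1 by simp
  have Dsmall: "Re (mat_trace (etaV * mat_log etaV)) - Re (mat_trace (etaV * mat_log RV)) = PsiF dV U2 W2 a2 b2 1 - PsiF dV U2 W2 a2 b2 0"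
    using D_formula[OF U2(1) W2(1), of a2 b2] U2 W2 by simp
  have G: "Gf dV u U2 W2 a2 b2 \<le> Gf n u U1 W1 a1 b1" if u: "0 < u" "u < 1" for u
  proof -
    have "\<exists>Z\<in>carrier_mat dV dV. PhiF u etaV RV Z = Gf dV u U2 W2 a2 b2"
      unfolding U2(2) W2(2) by (rule Phi_attained[OF U2(1) W2(1)]) (use a2 b2 u in auto)
    then obtain Z where Z: "Z \<in> carrier_mat dV dV" and PZ: "PhiF u etaV RV Z = Gf dV u U2 W2 a2 b2"
      by blast
    have "PhiF u etaV RV Z = PhiF u eta R (ext_mat dV dL Z)"
      using transfer_Phi[of eta dV dL R Z u] etac Rc Z etaV n_def by (simp add: RV_def)
    also have "\<dots> \<le> Gf n u U1 W1 a1 b1"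
      unfolding U1(2) W1(2) by (rule Phi_bound[OF U1(1) W1(1)]) (use a1 b1 u n_def in auto)
    finally show ?thesis using PZ by simp
  qed
  have cont: "continuous_on {0..1} f" unfolding f_def
    by (intro continuous_on_diff Psi_cont) (use a1 b1 a2 b2 in auto)
  have mono: "f 0 \<le> f 1"
  proof (rule DERIV_nonneg_imp_increasing_open[OF _ _ cont])
    fix u :: real assume u: "0 < u" "u < 1"
    have d: "DERIV f u :> DerF n U1 W1 a1 b1 u - DerF dV U2 W2 a2 b2 u"
      unfolding f_def by (intro DERIV_diff Psi_deriv) (use a1 b1 a2 b2 u in auto)
    have e1: "DerF n U1 W1 a1 b1 u = (\<Sum>i<n. a1 i) / (1 - u) - (\<Sum>j<n. b1 j) / (1 - u)^2 + u / (1 - u)^2 * Gf n u U1 W1 a1 b1"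
      by (rule Der_formula[OF U1(1) W1(1)]) (use a1 b1 u in auto)
    have e2: "DerF dV U2 W2 a2 b2 u = (\<Sum>i<dV. a2 i) / (1 - u) - (\<Sum>j<dV. b2 j) / (1 - u)^2 + u / (1 - u)^2 * Gf dV u U2 W2 a2 b2"
      by (rule Der_formula[OF U2(1) W2(1)]) (use a2 b2 u in auto)
    have "DerF n U1 W1 a1 b1 u - DerF dV U2 W2 a2 b2 u = u / (1 - u)^2 * (Gf n u U1 W1 a1 b1 - Gf dV u U2 W2 a2 b2)"
      unfolding e1 e2 sa1 sb1 sa2 sb2
      by (simp add: algebra_simps)
    also have "\<dots> \<ge> 0" using G[OF u] u by simp
    finally show "\<exists>y. DERIV f u :> y \<and> 0 \<le> y" using d by blast
  qed simp
  have "QELBO etaV eta R = Re (mat_trace (eta * mat_log R)) - Re (mat_trace (eta * mat_log eta)) + Re (mat_trace (etaV * mat_log etaV))"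
    by (simp add: QELBO_def vn_entropy_def)
  also have "\<dots> \<le> Re (mat_trace (etaV * mat_log RV))"
    using Dbig Dsmall mono unfolding f_def by linarith
  also have "\<dots> = log_likelihood dV dL etaV R" by (simp add: log_likelihood_def RV_def)
  finally show ?thesis by (simp add: R_def)
qed

end
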